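(* In the setting below, suppose condition (B) holds: there exist $C>0$, $R>0$ and $M\in\mathbb{N}$ such that for all $r\in(0,R)$ and all integers $m\ge M$, if $\mathbb{P}_X(S_r)>0$ then $$\mathbb{E}\big[|\eta(X^x_m)-\eta(x)|\ \big|\ X^x_m\in S_r\big]\le C\,\mathbb{E}\big[|\eta(X)-\eta(x)|\ \big|\ X\in S_r\big].$$ If $x$ is a Lebesgue point for $\eta$ with respect to $\mathbb{P}_X$, then $\mathbb{E}[|\eta(X^x_m)-\eta(x)|]\to 0$ as $m\to\infty$.
   Context: Let $(\mathcal{X},d)$ be a metric space with its Borel $\sigma$-algebra, let $(\Omega,\mathcal{F},\mathbb{P})$ be a probability space, and let $X,X_1,X_2,\dots$ be i.i.d. $\mathcal{X}$-valued random variables with common law $\mathbb{P}_X$. For $x\in\mathcal{X}$ and $r>0$ write $\bar B_r=\{x':d(x,x')\le r\}$ and $S_r=\{x':d(x,x')=r\}$. The support of $\mathbb{P}_X$ is the set of $x$ such that $\mathbb{P}_X(\bar B_r(x))>0$ for all $r>0$. Fix $x$ in the support of $\mathbb{P}_X$ and a bounded measurable $\eta:\mathcal{X}\to\mathbb{R}$. For each $m\in\mathbb{N}$, a nearest neighbor of $x$ among $X_1,\dots,X_m$ is a measurable $X^x_m:\Omega\to\mathcal{X}$ with $X^x_m(\omega)\in\arg\min_{x'\in\{X_1(\omega),\dots,X_m(\omega)\}}d(x,x')$ for every $\omega\in\Omega$; fix such a sequence $(X^x_m)_{m\in\mathbb{N}}$. Conditional expectations given an event $A$ of positive probability mean $\mathbb{E}[Z\mid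 A]=\mathbb{E}[Z\mathbb{I}_A]/\mathbb{P}(A)$ (note $\mathbb{P}_X(S_r)>0$ iff $\mathbb{P}(X^x_m\in S_r)>0$). The point $x$ is a Lebesgue point if $\mathbb{E}[\mathbb{I}_{\bar B_r}(X)\,|\eta(X)-\eta(x)|]/\mathbb{P}_X(\bar B_r)\to 0$ as $r\to 0^+$. *)

theory Defs
  imports "HOL-Probability.Probability"
begin

end

theory Submission imports Defs begin

locale nnset = prob_space M for M :: "'m measure" +
  fixes Y :: "nat \<Rightarrow> 'm \<Rightarrow> 'a::metric_space" and NN :: "nat \<Rightarrow> 'm \<Rightarrow> 'a"
    and \<eta> :: "'a \<Rightarrow> real" and x :: 'a and B :: real
  assumes meas_Y[measurable]: "\<And>i. Y i \<in> measurable M borel"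
    and indep: "indep_vars (\<lambda>_. borel) Y UNIV"
    and ident: "\<And>i. distr M borel (Y i) = distr M borel (Y 0)"
    and eta_meas[measurable]: "\<eta> \<in> borel_measurable borel"
    and eta_bdd: "\<And>y. \<bar>\<eta> y\<bar> \<le> B"
    and NN_meas: "\<And>m. m \<ge> 1 \<Longrightarrow> NN m \<in> measurable M borel"
    and NN_in: "\<And>m \<omega>. m \<ge> 1 \<Longrightarrow> \<omega> \<in> space M \<Longrightarrow> \<exists>i\<in>{1..m}. NN m \<omega> = Y i \<omega>"
    and NN_min: "\<And>m \<omega> i. m \<ge> 1 \<Longrightarrow> \<omega> \<in> space M \<Longrightarrow> i \<in> {1..m} \<Longrightarrow>
                   dist x (NN m \<omega>) \<le> dist x (Y i \<omega>)"
begin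

definition "D i \<omega> = dist x (Y i \<omega>)"
definition "phi y = \<bar>\<eta> y - \<eta> x\<bar>"
definition "G r = prob {\<omega>\<in>space M. r \<le> D 0 \<omega>}"
definition "F r = prob {\<omega>\<in>space M. D 0 \<omega> \<le> r}"
definition "pa r = prob {\<omega>\<in>space M. D 0 \<omega> = r}"
definition "Ds m \<omega> = dist x (NN m \<omega>)"
definition "kk m r = (if pa r > 0 then prob {\<omega>\<in>space M. Ds m \<omega> = r} / pa r else real m * G r ^ (m-1))"

lemma distx_meas[measurable]: "(\<lambda>y. dist x y) \<in> borel_measurable borel"
  by (intro borel_measurable_continuous_onI continuous_intros)

lemma D_meas[measurable]: "D i \<in> borel_measurable M"
  unfolding D_def using measurable_compose[OF meas_Y distx_meas] by simp

lemma phi_meas[measurable]: "phi \<in> borel_measurable borel"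
  unfolding phi_def by measurable

lemma phi_nonneg: "0 \<le> phi y" unfolding phi_def by simp
lemma phi_le: "phi y \<le> 2 * B"
  unfolding phi_def using eta_bdd[of y] eta_bdd[of x] by linarith
lemma phi_x: "phi x = 0" unfolding phi_def by simp
lemma B_nonneg: "0 \<le> B" using eta_bdd[of x] by linarith

lemma Ds_meas: "m \<ge> 1 \<Longrightarrow> Ds m \<in> borel_measurable M"
  unfolding Ds_def using measurable_compose[OF NN_meas distx_meas] by simp

lemma Ds_le: "m \<ge> 1 \<Longrightarrow> \<omega> \<in> space M \<Longrightarrow> i \<in> {1..m} \<Longrightarrow> Ds m \<omega> \<le> D i \<omega>"
  unfolding Ds_def D_def using NN_min by blast

lemma Ds_ex:
  assumes "m \<ge> 1" "\<omega> \<in> space M"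
  shows "\<exists>i\<in>{1..m}. NN m \<omega> = Y i \<omega> \<and> Ds m \<omega> = D i \<omega>"
proof -
  obtain i where "i \<in> {1..m}" "NN m \<omega> = Y i \<omega>" using NN_in[OF assms] by blast
  then show ?thesis unfolding Ds_def D_def by auto
qed

lemma Ds_ge_iff:
  assumes "m \<ge> 1" "\<omega> \<in> space M"
  shows "(r \<le> Ds m \<omega>) = (\<forall>j\<in>{1..m}. r \<le> D j \<omega>)" "(r < Ds m \<omega>) = (\<forall>j\<in>{1..m}. r < D j \<omega>)"
proof -
  obtain i where i: "i \<in> {1..m}" "Ds m \<omega> = D i \<omega>" using Ds_ex[OF assms] by blast
  show "(r \<le> Ds m \<omega>) = (\<forall>j\<in>{1..m}. r \<le> D j \<omega>)"
    using i Ds_le[OF assms] by (metis order_trans)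
  show "(r < Ds m \<omega>) = (\<forall>j\<in>{1..m}. r < D j \<omega>)"
    using i Ds_le[OF assms] by (metis less_le_trans)
qed

lemma G_eq: "G r = pa r + (1 - F r)"
proof -
  have e: "{\<omega>\<in>space M. r \<le> D 0 \<omega>} = {\<omega>\<in>space M. D 0 \<omega> = r} \<union> (space M - {\<omega>\<in>space M. D 0 \<omega> \<le> r})"
    by auto
  have "prob ({\<omega>\<in>space M. D 0 \<omega> = r} \<union> (space M - {\<omega>\<in>space M. D 0 \<omega> \<le> r}))
       = prob {\<omega>\<in>space M. D 0 \<omega> = r} + prob (space M - {\<omega>\<in>space M. D 0 \<omega> \<le> r})"
    by (rule finite_measure_Union) auto
  then have "G r = pa r + prob (space M - {\<omega>\<in>space M. D 0 \<omega> \<le> r})"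
    unfolding G_def pa_def e by simp
  also have "prob (space M - {\<omega>\<in>space M. D 0 \<omega> \<le> r}) = 1 - F r"
    unfolding F_def by (rule prob_compl) auto
  finally show ?thesis .
qed

lemma prob_gt: "prob {\<omega>\<in>space M. r < D 0 \<omega>} = 1 - F r"
proof -
  have "{\<omega>\<in>space M. r < D 0 \<omega>} = space M - {\<omega>\<in>space M. D 0 \<omega> \<le> r}" by auto
  then show ?thesis unfolding F_def by (simp add: prob_compl)
qed

lemma G_nonneg: "0 \<le> G r" unfolding G_def by simp
lemma G_le1: "G r \<le> 1" unfolding G_def by simp
lemma pa_nonneg: "0 \<le> pa r" unfolding pa_def by simp
lemma F_le1: "F r \<le> 1" unfolding F_def by simp

lemma G_lt: "s < t \<Longrightarrow> G t \<le> 1 - F s"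
  unfolding G_def prob_gt[symmetric] by (intro finite_measure_mono) auto

lemma ident_int:
  fixes f :: "'a \<Rightarrow> real"
  assumes [measurable]: "f \<in> borel_measurable borel"
  shows "(\<integral>\<omega>. f (Y i \<omega>) \<partial>M) = (\<integral>\<omega>. f (Y 0 \<omega>) \<partial>M)"
proof -
  have "(\<integral>\<omega>. f (Y i \<omega>) \<partial>M) = integral\<^sup>L (distr M borel (Y i)) f"
    by (rule integral_distr[symmetric]) auto
  also have "\<dots> = integral\<^sup>L (distr M borel (Y 0)) f" using ident[of i] by simp
  also have "\<dots> = (\<integral>\<omega>. f (Y 0 \<omega>) \<partial>M)"
    by (rule integral_distr) auto
  finally show ?thesis .
qed

lemma bounded_integrable:
  fixes f :: "'m \<Rightarrow> real"
  assumes "f \<in> borel_measurable M" "\<And>\<omega>. \<omega> \<in> space M \<Longrightarrow> \<bar>f \<omega>\<bar> \<le> C"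
  shows "integrable M f"
  using assms by (intro integrable_const_bound[where B=C]) auto

lemma prod_ind:
  assumes "finite J"
  shows "(\<Prod>j\<in>J. indicator S (dist x (Y j \<omega>)) :: real) = indicator {\<omega>. \<forall>j\<in>J. D j \<omega> \<in> S} \<omega>"
  using assms by (induction J rule: finite_induct) (auto simp: indicator_def D_def)

lemma prob_all:
  assumes J: "finite J" and S[measurable]: "S \<in> sets borel"
  shows "prob {\<omega>\<in>space M. \<forall>j\<in>J. D j \<omega> \<in> S} = prob {\<omega>\<in>space M. D 0 \<omega> \<in> S} ^ card J"
proof -
  have ind: "indep_vars (\<lambda>_. borel) (\<lambda>j \<omega>. indicator S (dist x (Y j \<omega>)) :: real) J"
    by (rule indep_vars_compose2[OF indep_vars_subset[OF indep], where N="\<lambda>_. borel"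
          and Y="\<lambda>j y. indicator S (dist x y) :: real"]) auto
  have int: "integrable M (\<lambda>\<omega>. indicator S (dist x (Y j \<omega>)) :: real)" for j
    by (rule bounded_integrable[where C=1]) (auto simp: indicator_def)
  have each: "(\<integral>\<omega>. (indicator S (dist x (Y j \<omega>)) :: real) \<partial>M) = prob {\<omega>\<in>space M. D 0 \<omega> \<in> S}" for j
  proof -
    have "(\<integral>\<omega>. (indicator S (dist x (Y j \<omega>)) :: real) \<partial>M) = (\<integral>\<omega>. indicator S (dist x (Y 0 \<omega>)) \<partial>M)"
    proof -
      have "(\<lambda>y. indicator S (dist x y) :: real) \<in> borel_measurable borel" by measurable
      from ident_int[OF this] show ?thesis .
    qed
    also have "\<dots> = (\<integral>\<omega>. indicator {\<omega>\<in>space M. D 0 \<omega> \<in> S} \<omega> \<partial>M)"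
      by (intro Bochner_Integration.integral_cong) (auto simp: indicator_def D_def)
    also have "\<dots> = prob {\<omega>\<in>space M. D 0 \<omega> \<in> S}"
      by (simp add: Int_absorb2)
    finally show ?thesis .
  qed
  have "prob {\<omega>\<in>space M. \<forall>j\<in>J. D j \<omega> \<in> S} = (\<integral>\<omega>. indicator {\<omega>\<in>space M. \<forall>j\<in>J. D j \<omega> \<in> S} \<omega> \<partial>M)"
    by (simp add: Int_absorb2)
  also have "\<dots> = (\<integral>\<omega>. (\<Prod>j\<in>J. (indicator S (dist x (Y j \<omega>)) :: real)) \<partial>M)"
    by (intro Bochner_Integration.integral_cong) (auto simp: prod_ind[OF J] split: split_indicator)
  also have "\<dots> = (\<Prod>j\<in>J. \<integral>\<omega>. indicator S (dist x (Y j \<omega>)) \<partial>M)"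
    by (rule indep_vars_lebesgue_integral[OF J ind int])
  also have "\<dots> = prob {\<omega>\<in>space M. D 0 \<omega> \<in> S} ^ card J"
    by (simp add: each)
  finally show ?thesis .
qed

lemma prob_all_ge: "finite J \<Longrightarrow> prob {\<omega>\<in>space M. \<forall>j\<in>J. t \<le> D j \<omega>} = G t ^ card J"
  using prob_all[of J "{t..}"] unfolding G_def by simp

lemma prob_all_gt: "finite J \<Longrightarrow> prob {\<omega>\<in>space M. \<forall>j\<in>J. t < D j \<omega>} = (1 - F t) ^ card J"
  using prob_all[of J "{t<..}"] prob_gt[of t] by simp

lemma prob_Ds_eq:
  assumes m: "m \<ge> 1"
  shows "prob {\<omega>\<in>space M. Ds m \<omega> = r} = G r ^ m - (1 - F r) ^ m"
proof -
  note Ds_meas[OF m, measurable]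
  have e1: "{\<omega>\<in>space M. r \<le> Ds m \<omega>} = {\<omega>\<in>space M. \<forall>j\<in>{1..m}. r \<le> D j \<omega>}"
    using Ds_ge_iff(1)[OF m] by auto
  have e2: "{\<omega>\<in>space M. r < Ds m \<omega>} = {\<omega>\<in>space M. \<forall>j\<in>{1..m}. r < D j \<omega>}"
    using Ds_ge_iff(2)[OF m] by auto
  have "{\<omega>\<in>space M. Ds m \<omega> = r} = {\<omega>\<in>space M. r \<le> Ds m \<omega>} - {\<omega>\<in>space M. r < Ds m \<omega>}"
    by auto
  then have "prob {\<omega>\<in>space M. Ds m \<omega> = r} = prob {\<omega>\<in>space M. r \<le> Ds m \<omega>} - prob {\<omega>\<in>space M. r < Ds m \<omega>}"
    by (simp add: finite_measure_Diff subset_eq)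
  also have "\<dots> = G r ^ m - (1 - F r) ^ m"
    unfolding e1 e2 by (simp add: prob_all_ge prob_all_gt)
  finally show ?thesis .
qed

lemma pow_diff_bounds:
  fixes a b :: real
  assumes "0 \<le> b" "b < a" "m \<ge> 1"
  shows "real m * b^(m-1) \<le> (a^m - b^m)/(a-b)" "(a^m - b^m)/(a-b) \<le> real m * a^(m-1)"
proof -
  have q: "(a^m - b^m)/(a-b) = (\<Sum>i<m. b^(m - Suc i) * a^i)"
    using assms by (simp add: power_diff_sumr2)
  have lo: "b^(m-1) \<le> b^(m - Suc i) * a^i" if "i < m" for i
  proof -
    have "b^(m-1) = b^(m - Suc i) * b^i" using that by (simp add: power_add[symmetric])
    also have "\<dots> \<le> b^(m - Suc i) * a^i"
      using assms by (intro mult_left_mono power_mono) auto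
    finally show ?thesis .
  qed
  have hi: "b^(m - Suc i) * a^i \<le> a^(m-1)" if "i < m" for i
  proof -
    have "b^(m - Suc i) * a^i \<le> a^(m - Suc i) * a^i"
      using assms by (intro mult_right_mono power_mono) auto
    also have "\<dots> = a^(m-1)" using that by (simp add: power_add[symmetric])
    finally show ?thesis .
  qed
  show "real m * b^(m-1) \<le> (a^m - b^m)/(a-b)"
    unfolding q using sum_bounded_below[of "{..<m}" "b^(m-1)", OF lo] by simp
  show "(a^m - b^m)/(a-b) \<le> real m * a^(m-1)"
    unfolding q using sum_bounded_above[of "{..<m}", OF hi] by simp
qed

lemma kk_bounds:
  assumes m: "m \<ge> 1"
  shows "real m * (G r - pa r)^(m-1) \<le> kk m r" "kk m r \<le> real m * G r ^ (m-1)"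
proof -
  have b: "G r - pa r = 1 - F r" using G_eq[of r] by simp
  have b0: "0 \<le> 1 - F r" using F_le1[of r] by simp
  show "real m * (G r - pa r)^(m-1) \<le> kk m r"
  proof (cases "pa r > 0")
    case True
    then have "kk m r = (G r ^ m - (G r - pa r)^m) / (G r - (G r - pa r))"
      unfolding kk_def using prob_Ds_eq[OF m] b by simp
    then show ?thesis using pow_diff_bounds(1)[of "G r - pa r" "G r" m] b b0 True m by simp
  next
    case False
    then have "pa r = 0" using pa_nonneg[of r] by simp
    then show ?thesis unfolding kk_def by simp
  qed
  show "kk m r \<le> real m * G r ^ (m-1)"
  proof (cases "pa r > 0")
    case True
    then have "kk m r = (G r ^ m - (G r - pa r)^m) / (G r - (G r - pa r))"
      unfolding kk_def using prob_Ds_eq[OF m] b by simp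
    then show ?thesis using pow_diff_bounds(2)[of "G r - pa r" "G r" m] b b0 True m by simp
  next
    case False
    then show ?thesis unfolding kk_def by simp
  qed
qed

lemma kk_nonneg: "m \<ge> 1 \<Longrightarrow> 0 \<le> kk m r"
  using kk_bounds(1)[of m r] G_eq[of r] F_le1[of r] by (smt (verit) mult_nonneg_nonneg of_nat_0_le_iff zero_le_power)

lemma kk_le: "m \<ge> 1 \<Longrightarrow> kk m r \<le> real m"
proof -
  assume m: "m \<ge> 1"
  have "G r ^ (m-1) \<le> 1" using G_le1[of r] G_nonneg[of r] by (simp add: power_le_one)
  then show ?thesis using kk_bounds(2)[OF m, of r] by (smt (verit) mult_left_le of_nat_0_le_iff)
qed

lemma kk_mono:
  assumes m: "m \<ge> 1" and st: "s \<le> t"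
  shows "kk m t \<le> kk m s"
proof (cases "s = t")
  case False
  then have "s < t" using st by simp
  have "kk m t \<le> real m * G t ^ (m-1)" by (rule kk_bounds(2)[OF m])
  also have "\<dots> \<le> real m * (G s - pa s) ^ (m-1)"
    using G_lt[OF \<open>s < t\<close>] G_eq[of s] G_nonneg[of t]
    by (intro mult_left_mono power_mono) auto
  also have "\<dots> \<le> kk m s" by (rule kk_bounds(1)[OF m])
  finally show ?thesis .
qed simp

definition "Wm J \<omega> = Min ((\<lambda>j. D j \<omega>) ` J)"

lemma Wm_meas[measurable]: "finite J \<Longrightarrow> Wm J \<in> borel_measurable M"
  unfolding Wm_def by measurable

lemma indep_Y_Wm:
  assumes "finite J" "i \<notin> J"
  shows "indep_var (borel \<Otimes>\<^sub>M borel) (\<lambda>\<omega>. (Y i \<omega>, 0::real)) (borel \<Otimes>\<^sub>M borel) (\<lambda>\<omega>. (x, Wm J \<omega>))"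
proof -
  have "indep_var
    (borel \<Otimes>\<^sub>M borel) ((\<lambda>f. (f i, 0::real)) \<circ> (\<lambda>\<omega>. restrict (\<lambda>i. Y i \<omega>) {i}))
    (borel \<Otimes>\<^sub>M borel) ((\<lambda>f. (x, Min ((\<lambda>j. dist x (f j)) ` J))) \<circ> (\<lambda>\<omega>. restrict (\<lambda>i. Y i \<omega>) J))"
  proof (rule indep_var_compose[OF indep_var_restrict[OF indep]])
    show "(\<lambda>f. (f i, 0::real)) \<in> measurable (Pi\<^sub>M {i} (\<lambda>_. borel)) (borel \<Otimes>\<^sub>M borel)"
      by measurable
    have "(\<lambda>f. Min ((\<lambda>j. dist x (f j)) ` J)) \<in> borel_measurable (Pi\<^sub>M J (\<lambda>_. borel))"
      using assms by (intro borel_measurable_Min) (auto intro!: measurable_compose[OF _ distx_meas] measurable_component_singleton)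
    then show "(\<lambda>f. (x, Min ((\<lambda>j. dist x (f j)) ` J))) \<in> measurable (Pi\<^sub>M J (\<lambda>_. borel)) (borel \<Otimes>\<^sub>M borel)"
      by measurable
  qed (use assms in auto)
  also have "((\<lambda>f. (f i, 0::real)) \<circ> (\<lambda>\<omega>. restrict (\<lambda>i. Y i \<omega>) {i})) = (\<lambda>\<omega>. (Y i \<omega>, 0::real))"
    by auto
  also have "((\<lambda>f. (x, Min ((\<lambda>j. dist x (f j)) ` J))) \<circ> (\<lambda>\<omega>. restrict (\<lambda>i. Y i \<omega>) J)) = (\<lambda>\<omega>. (x, Wm J \<omega>))"
    using assms by (auto simp: Wm_def D_def fun_eq_iff intro!: arg_cong[where f=Min] image_cong)
  finally show ?thesis .
qed

lemma fubini_indep: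
  fixes g :: "'a \<Rightarrow> real" and h :: "real \<Rightarrow> real \<Rightarrow> real"
  assumes J: "finite J" "i \<notin> J"
    and gm[measurable]: "g \<in> borel_measurable borel" and gb: "\<And>y. \<bar>g y\<bar> \<le> Cg"
    and hm: "(\<lambda>p. h (fst p) (snd p)) \<in> borel_measurable (borel \<Otimes>\<^sub>M borel)"
    and hb: "\<And>s w. \<bar>h s w\<bar> \<le> 1"
  shows "(\<integral>\<omega>. g (Y i \<omega>) * h (D i \<omega>) (Wm J \<omega>) \<partial>M)
       = (\<integral>\<omega>. g (Y 0 \<omega>) * (\<integral>\<omega>'. h (D 0 \<omega>) (Wm J \<omega>') \<partial>M) \<partial>M)"
proof -
  note Wm_meas[OF J(1), measurable]
  have Cg0: "0 \<le> Cg" using gb[of x] by linarith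
  let ?X1 = "\<lambda>\<omega>. (Y i \<omega>, 0::real)" and ?X2 = "\<lambda>\<omega>. (x, Wm J \<omega>)"
  let ?P1 = "distr M (borel \<Otimes>\<^sub>M borel) ?X1" and ?P2 = "distr M (borel \<Otimes>\<^sub>M borel) ?X2"
  interpret P1: prob_space ?P1 by (rule prob_space_distr) simp
  interpret P2: prob_space ?P2 by (rule prob_space_distr) simp
  interpret P12: pair_prob_space ?P1 ?P2 ..
  define f where "f = (\<lambda>pq::('a \<times> real) \<times> ('a \<times> real). g (fst (fst pq)) * h (dist x (fst (fst pq))) (snd (snd pq)))"
  have m1: "(\<lambda>pq::('a \<times> real) \<times> ('a \<times> real). (dist x (fst (fst pq)), snd (snd pq)))
     \<in> measurable ((borel \<Otimes>\<^sub>M borel) \<Otimes>\<^sub>M (borel \<Otimes>\<^sub>M borel)) (borel \<Otimes>\<^sub>M borel)"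
    by measurable
  have hm2: "(\<lambda>pq::('a \<times> real) \<times> ('a \<times> real). h (dist x (fst (fst pq))) (snd (snd pq)))
      \<in> borel_measurable ((borel \<Otimes>\<^sub>M borel) \<Otimes>\<^sub>M (borel \<Otimes>\<^sub>M borel))"
    using measurable_compose[OF m1 hm] by simp
  have fm[measurable]: "f \<in> borel_measurable ((borel \<Otimes>\<^sub>M borel) \<Otimes>\<^sub>M (borel \<Otimes>\<^sub>M borel))"
    unfolding f_def using hm2 by measurable
  define K where "K t = (\<integral>\<omega>'. h t (Wm J \<omega>') \<partial>M)" for t
  have m2: "(\<lambda>p::real \<times> 'm. (fst p, Wm J (snd p))) \<in> measurable (borel \<Otimes>\<^sub>M M) (borel \<Otimes>\<^sub>M borel)"
    by measurable
  have hm3: "(\<lambda>p::real \<times> 'm. h (fst p) (Wm J (snd p))) \<in> borel_measurable (borel \<Otimes>\<^sub>M M)"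
    using measurable_compose[OF m2 hm] by simp
  have Km[measurable]: "K \<in> borel_measurable borel"
    unfolding K_def using borel_measurable_lebesgue_integral[of "\<lambda>t \<omega>'. h t (Wm J \<omega>')" borel] hm3
    by (simp add: case_prod_beta')
  have "(\<integral>\<omega>. g (Y i \<omega>) * h (D i \<omega>) (Wm J \<omega>) \<partial>M) = (\<integral>\<omega>. f (?X1 \<omega>, ?X2 \<omega>) \<partial>M)"
    by (simp add: f_def D_def)
  also have "\<dots> = integral\<^sup>L (distr M ((borel \<Otimes>\<^sub>M borel) \<Otimes>\<^sub>M (borel \<Otimes>\<^sub>M borel)) (\<lambda>\<omega>. (?X1 \<omega>, ?X2 \<omega>))) f"
    by (rule integral_distr[symmetric]) auto
  also have "distr M ((borel \<Otimes>\<^sub>M borel) \<Otimes>\<^sub>M (borel \<Otimes>\<^sub>M borel)) (\<lambda>\<omega>. (?X1 \<omega>, ?X2 \<omega>)) = ?P1 \<Otimes>\<^sub>M ?P2"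
    using indep_var_distribution_eq[THEN iffD1, OF indep_Y_Wm[OF J]] by simp
  also have "integral\<^sup>L (?P1 \<Otimes>\<^sub>M ?P2) f = (\<integral>y. (\<integral>w. f (y, w::'a \<times> real) \<partial>?P2) \<partial>?P1)"
  proof (rule P12.integral_fst'[symmetric])
    show "integrable (?P1 \<Otimes>\<^sub>M ?P2) f"
    proof (rule P12.integrable_const_bound[where B=Cg])
      show "AE p in ?P1 \<Otimes>\<^sub>M ?P2. norm (f p) \<le> Cg"
      proof (intro AE_I2)
        fix p :: "('a \<times> real) \<times> ('a \<times> real)"
        have "\<bar>g (fst (fst p))\<bar> * \<bar>h (dist x (fst (fst p))) (snd (snd p))\<bar> \<le> Cg * 1"
          using gb hb abs_ge_zero Cg0 by (intro mult_mono) auto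
        then show "norm (f p) \<le> Cg" by (simp add: f_def abs_mult)
      qed
    qed simp
  qed
  also have "\<dots> = (\<integral>y. g (fst y) * K (dist x (fst y)) \<partial>?P1)"
  proof (intro Bochner_Integration.integral_cong refl)
    fix y :: "'a \<times> real"
    have "(\<integral>w. f (y, w::'a \<times> real) \<partial>?P2) = (\<integral>w. g (fst y) * h (dist x (fst y)) (snd w) \<partial>?P2)" by (simp add: f_def)
    also have "\<dots> = g (fst y) * (\<integral>w. h (dist x (fst y)) (snd w) \<partial>?P2)" by simp
    also have "(\<integral>w. h (dist x (fst y)) (snd w) \<partial>?P2) = K (dist x (fst y))"
      unfolding K_def
    proof (subst integral_distr)
      have "(\<lambda>w. h (dist x (fst y)) w) \<in> borel_measurable borel"
        using measurable_Pair2[OF hm, of "dist x (fst y)"] by simp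
      then show "(\<lambda>w. h (dist x (fst y)) (snd w)) \<in> borel_measurable (borel \<Otimes>\<^sub>M borel)"
        by measurable
    qed simp_all
    finally show "(\<integral>w. f (y, w::'a \<times> real) \<partial>?P2) = g (fst y) * K (dist x (fst y))" .
  qed
  also have "\<dots> = (\<integral>\<omega>. g (Y i \<omega>) * K (dist x (Y i \<omega>)) \<partial>M)"
    by (subst integral_distr) auto
  also have "\<dots> = (\<integral>\<omega>. g (Y 0 \<omega>) * K (dist x (Y 0 \<omega>)) \<partial>M)"
  proof -
    have "(\<lambda>y. g y * K (dist x y)) \<in> borel_measurable borel" by measurable
    from ident_int[OF this] show ?thesis .
  qed
  finally show ?thesis unfolding K_def D_def .
qed

lemma Wm_iff:
  assumes "finite J" "J \<noteq> {}"
  shows "(t \<le> Wm J \<omega>) = (\<forall>j\<in>J. t \<le> D j \<omega>)" "(t < Wm J \<omega>) = (\<forall>j\<in>J. t < D j \<omega>)"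
  unfolding Wm_def using assms by auto

lemma fubini_le:
  fixes g :: "'a \<Rightarrow> real"
  assumes J: "finite J" "J \<noteq> {}" "i \<notin> J"
    and gm[measurable]: "g \<in> borel_measurable borel" and gb: "\<And>y. \<bar>g y\<bar> \<le> Cg"
  shows "(\<integral>\<omega>. g (Y i \<omega>) * (if D i \<omega> \<le> Wm J \<omega> then 1 else 0) \<partial>M)
       = (\<integral>\<omega>. g (Y 0 \<omega>) * G (D 0 \<omega>) ^ card J \<partial>M)"
proof -
  note Wm_meas[OF J(1), measurable]
  have hm: "(\<lambda>p::real\<times>real. (if fst p \<le> snd p then 1 else 0::real)) \<in> borel_measurable (borel \<Otimes>\<^sub>M borel)"
    by measurable
  have "(\<integral>\<omega>. g (Y i \<omega>) * (if D i \<omega> \<le> Wm J \<omega> then 1 else 0) \<partial>M)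
      = (\<integral>\<omega>. g (Y 0 \<omega>) * (\<integral>\<omega>'. (if D 0 \<omega> \<le> Wm J \<omega>' then 1 else 0) \<partial>M) \<partial>M)"
    by (rule fubini_indep[OF J(1,3) gm gb hm]) auto
  also have "\<dots> = (\<integral>\<omega>. g (Y 0 \<omega>) * G (D 0 \<omega>) ^ card J \<partial>M)"
  proof (intro Bochner_Integration.integral_cong refl)
    fix \<omega>
    have "(\<integral>\<omega>'. (if D 0 \<omega> \<le> Wm J \<omega>' then 1 else 0::real) \<partial>M) = (\<integral>\<omega>'. indicator {\<omega>'\<in>space M. \<forall>j\<in>J. D 0 \<omega> \<le> D j \<omega>'} \<omega>' \<partial>M)"
      by (intro Bochner_Integration.integral_cong refl) (auto simp: Wm_iff[OF J(1,2)] split: split_indicator)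
    also have "\<dots> = G (D 0 \<omega>) ^ card J"
      using prob_all_ge[OF J(1)] by (simp add: Int_absorb2)
    finally show "g (Y 0 \<omega>) * (\<integral>\<omega>'. (if D 0 \<omega> \<le> Wm J \<omega>' then 1 else 0) \<partial>M) = g (Y 0 \<omega>) * G (D 0 \<omega>) ^ card J"
      by simp
  qed
  finally show ?thesis .
qed

lemma fubini_lt:
  fixes g :: "'a \<Rightarrow> real"
  assumes J: "finite J" "J \<noteq> {}" "i \<notin> J"
    and gm[measurable]: "g \<in> borel_measurable borel" and gb: "\<And>y. \<bar>g y\<bar> \<le> Cg"
  shows "(\<integral>\<omega>. g (Y i \<omega>) * (if D i \<omega> < Wm J \<omega> then 1 else 0) \<partial>M)
       = (\<integral>\<omega>. g (Y 0 \<omega>) * (1 - F (D 0 \<omega>)) ^ card J \<partial>M)"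
proof -
  note Wm_meas[OF J(1), measurable]
  have hm: "(\<lambda>p::real\<times>real. (if fst p < snd p then 1 else 0::real)) \<in> borel_measurable (borel \<Otimes>\<^sub>M borel)"
    by measurable
  have "(\<integral>\<omega>. g (Y i \<omega>) * (if D i \<omega> < Wm J \<omega> then 1 else 0) \<partial>M)
      = (\<integral>\<omega>. g (Y 0 \<omega>) * (\<integral>\<omega>'. (if D 0 \<omega> < Wm J \<omega>' then 1 else 0) \<partial>M) \<partial>M)"
    by (rule fubini_indep[OF J(1,3) gm gb hm]) auto
  also have "\<dots> = (\<integral>\<omega>. g (Y 0 \<omega>) * (1 - F (D 0 \<omega>)) ^ card J \<partial>M)"
  proof (intro Bochner_Integration.integral_cong refl)
    fix \<omega>
    have "(\<integral>\<omega>'. (if D 0 \<omega> < Wm J \<omega>' then 1 else 0::real) \<partial>M) = (\<integral>\<omega>'. indicator {\<omega>'\<in>space M. \<forall>j\<in>J. D 0 \<omega> < D j \<omega>'} \<omega>' \<partial>M)"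
      by (intro Bochner_Integration.integral_cong refl) (auto simp: Wm_iff[OF J(1,2)] split: split_indicator)
    also have "\<dots> = (1 - F (D 0 \<omega>)) ^ card J"
      using prob_all_gt[OF J(1)] by (simp add: Int_absorb2)
    finally show "g (Y 0 \<omega>) * (\<integral>\<omega>'. (if D 0 \<omega> < Wm J \<omega>' then 1 else 0) \<partial>M) = g (Y 0 \<omega>) * (1 - F (D 0 \<omega>)) ^ card J"
      by simp
  qed
  finally show ?thesis .
qed

definition "Atoms = {r. 0 < pa r}"

lemma pa_distr: "pa r = measure (distr M borel (D 0)) {r}"
  unfolding pa_def by (subst measure_distr) (auto intro!: arg_cong[where f=prob])

lemma countable_Atoms: "countable Atoms"
proof -
  interpret P: prob_space "distr M borel (D 0)" by (rule prob_space_distr) simp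
  show ?thesis unfolding Atoms_def pa_distr using P.countable_support
    by (rule countable_subset[rotated]) auto
qed

lemma Atoms_sets[measurable]: "Atoms \<in> sets borel"
  by (rule sets.countable[OF _ countable_Atoms]) auto

lemma not_atom: "r \<notin> Atoms \<Longrightarrow> pa r = 0"
  unfolding Atoms_def using pa_nonneg[of r] by simp

lemma kk_nonatom: "r \<notin> Atoms \<Longrightarrow> kk m r = real m * G r ^ (m-1)"
  unfolding kk_def using not_atom[of r] by simp

lemma kk_nonatom2: "r \<notin> Atoms \<Longrightarrow> kk m r = real m * (1 - F r) ^ (m-1)"
  unfolding kk_nonatom using not_atom[of r] G_eq[of r] by simp

lemma kk_meas[measurable]: "m \<ge> 1 \<Longrightarrow> kk m \<in> borel_measurable borel"
proof -
  assume m: "m \<ge> 1"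
  have "mono (\<lambda>r. - kk m r)" by (auto simp: mono_def intro: kk_mono[OF m])
  then have "(\<lambda>r. - kk m r) \<in> borel_measurable borel" by (rule borel_measurable_mono)
  then have "(\<lambda>r. - (- kk m r)) \<in> borel_measurable borel" by measurable
  then show ?thesis by simp
qed

definition "Jf m i = {1..m} - {i::nat}"

lemma Jf_props:
  assumes "m \<ge> 2" "i \<in> {1..m}"
  shows "finite (Jf m i)" "Jf m i \<noteq> {}" "i \<notin> Jf m i" "card (Jf m i) = m - 1"
proof -
  show "finite (Jf m i)" "i \<notin> Jf m i" unfolding Jf_def by auto
  show "card (Jf m i) = m - 1" unfolding Jf_def using assms by (simp add: card_Diff_singleton)
  then show "Jf m i \<noteq> {}" using assms by auto
qed

lemma nonatom_phi:
  assumes m: "m \<ge> 2" and Bm[measurable]: "Bs \<in> sets borel" and BA: "Bs \<inter> Atoms = {}"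
  shows "(\<integral>\<omega>. phi (NN m \<omega>) * indicator Bs (Ds m \<omega>) \<partial>M)
     \<le> (\<integral>\<omega>. phi (Y 0 \<omega>) * indicator Bs (D 0 \<omega>) * kk m (D 0 \<omega>) \<partial>M)"
proof -
  have m1: "m \<ge> 1" using m by simp
  note NN_meas[OF m1, measurable] Ds_meas[OF m1, measurable] kk_meas[OF m1, measurable]
  define g where "g y = phi y * indicator Bs (dist x y)" for y
  have gm[measurable]: "g \<in> borel_measurable borel" unfolding g_def by measurable
  have gb: "\<bar>g y\<bar> \<le> 2 * B" for y
    unfolding g_def using phi_le[of y] phi_nonneg[of y] B_nonneg by (auto split: split_indicator)
  have g0: "0 \<le> g y" for y unfolding g_def using phi_nonneg[of y] by (auto split: split_indicator)
  define T where "T i \<omega> = g (Y i \<omega>) * (if D i \<omega> \<le> Wm (Jf m i) \<omega> then 1 else 0)" for i \<omega>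
  have Tm[measurable]: "T i \<in> borel_measurable M" if "i \<in> {1..m}" for i
    unfolding T_def using Jf_props(1)[OF m that] by measurable
  have Tint: "integrable M (T i)" if "i \<in> {1..m}" for i
    by (rule bounded_integrable[where C="2*B"]) (use Tm[OF that] gb B_nonneg in \<open>auto simp: T_def\<close>)
  have T0: "0 \<le> T i \<omega>" for i \<omega> unfolding T_def using g0 by simp
  have pw: "phi (NN m \<omega>) * indicator Bs (Ds m \<omega>) \<le> (\<Sum>i\<in>{1..m}. T i \<omega>)" if \<omega>: "\<omega> \<in> space M" for \<omega>
  proof -
    obtain i0 where i0: "i0 \<in> {1..m}" "NN m \<omega> = Y i0 \<omega>" "Ds m \<omega> = D i0 \<omega>" using Ds_ex[OF m1 \<omega>] by blast
    have "D i0 \<omega> \<le> Wm (Jf m i0) \<omega>"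
      unfolding Wm_iff(1)[OF Jf_props(1,2)[OF m i0(1)]] using Ds_le[OF m1 \<omega>] i0 by (auto simp: Jf_def)
    then have eq: "T i0 \<omega> = phi (NN m \<omega>) * indicator Bs (Ds m \<omega>)"
      unfolding T_def g_def using i0 by (simp add: D_def)
    have "T i0 \<omega> \<le> (\<Sum>i\<in>{1..m}. T i \<omega>)"
      by (rule member_le_sum) (use i0 T0 in auto)
    then show ?thesis using eq by simp
  qed
  have "(\<integral>\<omega>. phi (NN m \<omega>) * indicator Bs (Ds m \<omega>) \<partial>M) \<le> (\<integral>\<omega>. (\<Sum>i\<in>{1..m}. T i \<omega>) \<partial>M)"
  proof (rule integral_mono)
    show "integrable M (\<lambda>\<omega>. phi (NN m \<omega>) * indicator Bs (Ds m \<omega>))"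
      by (rule bounded_integrable[where C="2*B"]) (use phi_le phi_nonneg B_nonneg in \<open>auto split: split_indicator\<close>)
    show "integrable M (\<lambda>\<omega>. \<Sum>i\<in>{1..m}. T i \<omega>)" using Tint by auto
  qed (use pw in auto)
  also have "\<dots> = (\<Sum>i\<in>{1..m}. \<integral>\<omega>. T i \<omega> \<partial>M)"
    by (rule Bochner_Integration.integral_sum) (use Tint in auto)
  also have "\<dots> = (\<Sum>i\<in>{1..m}. \<integral>\<omega>. g (Y 0 \<omega>) * G (D 0 \<omega>) ^ (m-1) \<partial>M)"
  proof (rule sum.cong[OF refl])
    fix i assume i: "i \<in> {1..m}"
    show "(\<integral>\<omega>. T i \<omega> \<partial>M) = (\<integral>\<omega>. g (Y 0 \<omega>) * G (D 0 \<omega>) ^ (m-1) \<partial>M)"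
      unfolding T_def using fubini_le[OF Jf_props(1,2,3)[OF m i] gm gb] Jf_props(4)[OF m i] by simp
  qed
  also have "\<dots> = real m * (\<integral>\<omega>. g (Y 0 \<omega>) * G (D 0 \<omega>) ^ (m-1) \<partial>M)" by simp
  also have "\<dots> = (\<integral>\<omega>. g (Y 0 \<omega>) * (real m * G (D 0 \<omega>) ^ (m-1)) \<partial>M)"
    by (simp add: ac_simps)
  also have "\<dots> = (\<integral>\<omega>. phi (Y 0 \<omega>) * indicator Bs (D 0 \<omega>) * kk m (D 0 \<omega>) \<partial>M)"
  proof (intro Bochner_Integration.integral_cong refl)
    fix \<omega>
    show "g (Y 0 \<omega>) * (real m * G (D 0 \<omega>) ^ (m-1)) = phi (Y 0 \<omega>) * indicator Bs (D 0 \<omega>) * kk m (D 0 \<omega>)"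
    proof (cases "D 0 \<omega> \<in> Bs")
      case True
      then have "D 0 \<omega> \<notin> Atoms" using BA by auto
      then show ?thesis using True by (simp add: g_def kk_nonatom D_def)
    qed (simp add: g_def D_def)
  qed
  finally show ?thesis .
qed

lemma nonatom_mass:
  assumes m: "m \<ge> 2" and Bm[measurable]: "Bs \<in> sets borel" and BA: "Bs \<inter> Atoms = {}"
  shows "(\<integral>\<omega>. indicator Bs (D 0 \<omega>) * kk m (D 0 \<omega>) \<partial>M) \<le> 1"
proof -
  have m1: "m \<ge> 1" using m by simp
  note kk_meas[OF m1, measurable]
  define g where "g y = (indicator Bs (dist x y) :: real)" for y
  have gm[measurable]: "g \<in> borel_measurable borel" unfolding g_def by measurable
  have gb: "\<bar>g y\<bar> \<le> 1" for y unfolding g_def by (auto split: split_indicator)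
  have g0: "0 \<le> g y" "g y \<le> 1" for y unfolding g_def by (auto split: split_indicator)
  define P where "P i \<omega> = (D i \<omega> < Wm (Jf m i) \<omega>)" for i \<omega>
  define T where "T i \<omega> = g (Y i \<omega>) * (if P i \<omega> then 1 else 0)" for i \<omega>
  have Tm[measurable]: "T i \<in> borel_measurable M" if "i \<in> {1..m}" for i
    unfolding T_def P_def using Jf_props(1)[OF m that] by measurable
  have Tint: "integrable M (T i)" if "i \<in> {1..m}" for i
    by (rule bounded_integrable[where C="1"]) (use Tm[OF that] gb in \<open>auto simp: T_def\<close>)
  have pw: "(\<Sum>i\<in>{1..m}. T i \<omega>) \<le> 1" if \<omega>: "\<omega> \<in> space M" for \<omega>
  proof -
    have le: "(\<Sum>i\<in>{1..m}. T i \<omega>) \<le> (\<Sum>i\<in>{1..m}. if P i \<omega> then 1 else 0)"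
      by (intro sum_mono) (use g0 in \<open>auto simp: T_def\<close>)
    show ?thesis
    proof (cases "\<exists>i0\<in>{1..m}. P i0 \<omega>")
      case True
      then obtain i0 where i0: "i0 \<in> {1..m}" "P i0 \<omega>" by blast
      have uniq: "P i \<omega> = (i = i0)" if i: "i \<in> {1..m}" for i
      proof
        assume Pi: "P i \<omega>"
        show "i = i0"
        proof (rule ccontr)
          assume ne: "i \<noteq> i0"
          then have "i0 \<in> Jf m i" "i \<in> Jf m i0" using i i0 by (auto simp: Jf_def)
          then have "D i \<omega> < D i0 \<omega>" "D i0 \<omega> < D i \<omega>"
            using Pi i0(2) Wm_iff(2)[OF Jf_props(1,2)[OF m i]] Wm_iff(2)[OF Jf_props(1,2)[OF m i0(1)]]
            unfolding P_def by auto
          then show False by simp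
        qed
      qed (use i0 in simp)
      have "(\<Sum>i\<in>{1..m}. if P i \<omega> then 1 else 0::real) = (\<Sum>i\<in>{1..m}. if i = i0 then 1 else 0)"
        by (rule sum.cong[OF refl]) (simp add: uniq)
      also have "\<dots> = 1" using i0(1) by simp
      finally show ?thesis using le by simp
    next
      case False
      then have "(\<Sum>i\<in>{1..m}. if P i \<omega> then 1 else 0::real) = 0" by simp
      then show ?thesis using le by simp
    qed
  qed
  have "(\<integral>\<omega>. indicator Bs (D 0 \<omega>) * kk m (D 0 \<omega>) \<partial>M) = (\<integral>\<omega>. g (Y 0 \<omega>) * (real m * (1 - F (D 0 \<omega>)) ^ (m-1)) \<partial>M)"
  proof (intro Bochner_Integration.integral_cong refl)
    fix \<omega>
    show "indicator Bs (D 0 \<omega>) * kk m (D 0 \<omega>) = g (Y 0 \<omega>) * (real m * (1 - F (D 0 \<omega>)) ^ (m-1))"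
    proof (cases "D 0 \<omega> \<in> Bs")
      case True
      then have "D 0 \<omega> \<notin> Atoms" using BA by auto
      then show ?thesis using True by (simp add: g_def kk_nonatom2 D_def)
    qed (simp add: g_def D_def)
  qed
  also have "\<dots> = real m * (\<integral>\<omega>. g (Y 0 \<omega>) * (1 - F (D 0 \<omega>)) ^ (m-1) \<partial>M)"
    by (simp add: ac_simps)
  also have "\<dots> = (\<Sum>i\<in>{1..m}. \<integral>\<omega>. g (Y 0 \<omega>) * (1 - F (D 0 \<omega>)) ^ (m-1) \<partial>M)" by simp
  also have "\<dots> = (\<Sum>i\<in>{1..m}. \<integral>\<omega>. T i \<omega> \<partial>M)"
  proof (rule sum.cong[OF refl])
    fix i assume i: "i \<in> {1..m}"
    show "(\<integral>\<omega>. g (Y 0 \<omega>) * (1 - F (D 0 \<omega>)) ^ (m-1) \<partial>M) = (\<integral>\<omega>. T i \<omega> \<partial>M)"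
      unfolding T_def P_def using fubini_lt[OF Jf_props(1,2,3)[OF m i] gm gb] Jf_props(4)[OF m i] by simp
  qed
  also have "\<dots> = (\<integral>\<omega>. (\<Sum>i\<in>{1..m}. T i \<omega>) \<partial>M)"
    by (rule Bochner_Integration.integral_sum[symmetric]) (use Tint in auto)
  also have "\<dots> \<le> (\<integral>\<omega>. 1 \<partial>M)"
    by (rule integral_mono) (use Tint pw in auto)
  also have "\<dots> = 1" by (simp add: prob_space)
  finally show ?thesis .
qed

lemma pt_conv: "(\<lambda>n. c * indicator {..s0 - 1 / Suc n} (z::real) :: real) \<longlonglongrightarrow> c * indicator {..<s0} z"
proof (cases "z < s0")
  case True
  then obtain N where N: "inverse (real (Suc N)) < s0 - z" using reals_Archimedean[of "s0 - z"] by auto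
  have "eventually (\<lambda>n. c * indicator {..s0 - 1 / Suc n} z = c * indicator {..<s0} z) sequentially"
    unfolding eventually_sequentially
  proof (intro exI allI impI)
    fix n assume "N \<le> n"
    then have "1 / real (Suc n) \<le> 1 / real (Suc N)" by (intro divide_left_mono) auto
    then have "z \<le> s0 - 1 / Suc n" using N by (simp add: inverse_eq_divide)
    then show "c * indicator {..s0 - 1 / Suc n} z = c * indicator {..<s0} z" using True by simp
  qed
  then show ?thesis by (rule tendsto_eventually)
next
  case False
  have "indicator {..s0 - 1 / Suc n} z = (0::real)" for n
  proof -
    have "s0 - 1 / Suc n < s0" by simp
    then have "\<not> z \<le> s0 - 1 / Suc n" using False by linarith
    then show ?thesis by (simp add: indicator_def)
  qed
  then show ?thesis using False by simp
qed

lemma ind_conv: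
  fixes w Z :: "'m \<Rightarrow> real"
  assumes [measurable]: "w \<in> borel_measurable M" "Z \<in> borel_measurable M" and wb: "\<And>\<omega>. \<bar>w \<omega>\<bar> \<le> Wb"
  shows "(\<lambda>n. \<integral>\<omega>. w \<omega> * indicator {..s0 - 1 / Suc n} (Z \<omega>) \<partial>M) \<longlonglongrightarrow> (\<integral>\<omega>. w \<omega> * indicator {..<s0} (Z \<omega>) \<partial>M)"
proof -
  have Wb0: "0 \<le> Wb" using wb[of undefined] by linarith
  show ?thesis
proof (rule integral_dominated_convergence[where w="\<lambda>_. Wb"])
  show "AE \<omega> in M. (\<lambda>n. w \<omega> * indicator {..s0 - 1 / Suc n} (Z \<omega>)) \<longlonglongrightarrow> w \<omega> * indicator {..<s0} (Z \<omega>)"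
    by (intro AE_I2 pt_conv)
  show "AE \<omega> in M. norm (w \<omega> * indicator {..s0 - 1 / Suc n} (Z \<omega>)) \<le> Wb" for n
    using wb Wb0 by (intro AE_I2) (auto split: split_indicator simp: abs_mult)
qed auto
qed

lemma downset_bound:
  fixes w Z :: "'m \<Rightarrow> real"
  assumes wm[measurable]: "w \<in> borel_measurable M" and Zm[measurable]: "Z \<in> borel_measurable M"
    and wb: "\<And>\<omega>. \<bar>w \<omega>\<bar> \<le> Wb"
    and Sd: "\<And>r r'. r \<in> S \<Longrightarrow> r' \<le> r \<Longrightarrow> r' \<in> S" and Sb: "S \<subseteq> {..\<delta>}"
    and hyp: "\<And>s. s \<le> \<delta> \<Longrightarrow> (\<integral>\<omega>. w \<omega> * indicator {..s} (Z \<omega>) \<partial>M) \<le> \<epsilon> * prob {\<omega>\<in>space M. Z \<omega> \<le> s}"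
  shows "(\<integral>\<omega>. w \<omega> * indicator S (Z \<omega>) \<partial>M) \<le> \<epsilon> * (\<integral>\<omega>. indicator S (Z \<omega>) \<partial>M)"
proof (cases "S = {}")
  case True then show ?thesis by simp
next
  case ne: False
  have bdd: "bdd_above S" using Sb by (auto simp: bdd_above_def)
  define s0 where "s0 = Sup S"
  have up: "r \<le> s0" if "r \<in> S" for r unfolding s0_def using that bdd by (rule cSup_upper)
  have prob1: "(\<integral>\<omega>. indicator T (Z \<omega>) \<partial>M) = prob {\<omega>\<in>space M. Z \<omega> \<in> T}" if [measurable]: "T \<in> sets borel" for T
  proof -
    have "(\<integral>\<omega>. (indicator T (Z \<omega>) :: real) \<partial>M) = (\<integral>\<omega>. indicator {\<omega>\<in>space M. Z \<omega> \<in> T} \<omega> \<partial>M)"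
      by (intro Bochner_Integration.integral_cong refl) (auto split: split_indicator)
    then show ?thesis by (simp add: Int_absorb2)
  qed
  show ?thesis
  proof (cases "s0 \<in> S")
    case True
    then have "S = {..s0}" using up Sd by auto
    moreover have "s0 \<le> \<delta>" using True Sb by auto
    ultimately show ?thesis using hyp[of s0] prob1[of "{..s0}"] by simp
  next
    case False
    have S: "S = {..<s0}"
    proof safe
      fix r assume "r \<in> S" then show "r < s0" using up False by (metis le_less)
    next
      fix r assume "r < s0"
      then obtain r' where "r' \<in> S" "r < r'" using less_cSup_iff[OF ne bdd] unfolding s0_def by auto
      then show "r \<in> S" using Sd by auto
    qed
    have le: "(\<integral>\<omega>. w \<omega> * indicator {..s0 - 1 / Suc n} (Z \<omega>) \<partial>M) \<le> \<epsilon> * (\<integral>\<omega>. 1 * indicator {..s0 - 1 / Suc n} (Z \<omega>) \<partial>M)" for n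
    proof -
      have "s0 - 1 / Suc n \<in> S" unfolding S by simp
      then have "s0 - 1 / Suc n \<le> \<delta>" using Sb by auto
      then show ?thesis using hyp[of "s0 - 1 / Suc n"] prob1[of "{..s0 - 1 / Suc n}"] by simp
    qed
    have l1: "(\<lambda>n. \<integral>\<omega>. w \<omega> * indicator {..s0 - 1 / Suc n} (Z \<omega>) \<partial>M) \<longlonglongrightarrow> (\<integral>\<omega>. w \<omega> * indicator {..<s0} (Z \<omega>) \<partial>M)"
      by (rule ind_conv[OF wm Zm wb])
    have l2: "(\<lambda>n. \<epsilon> * (\<integral>\<omega>. 1 * indicator {..s0 - 1 / Suc n} (Z \<omega>) \<partial>M)) \<longlonglongrightarrow> \<epsilon> * (\<integral>\<omega>. 1 * indicator {..<s0} (Z \<omega>) \<partial>M)"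
      by (intro tendsto_mult_left ind_conv[where Wb=1]) auto
    have "(\<integral>\<omega>. w \<omega> * indicator {..<s0} (Z \<omega>) \<partial>M) \<le> \<epsilon> * (\<integral>\<omega>. 1 * indicator {..<s0} (Z \<omega>) \<partial>M)"
      using l1 l2 le by (intro LIMSEQ_le) auto
    then show ?thesis unfolding S by simp
  qed
qed

lemma layer_id:
  fixes v Z :: "'m \<Rightarrow> real" and k :: "real \<Rightarrow> real"
  assumes vm[measurable]: "v \<in> borel_measurable M" and Zm[measurable]: "Z \<in> borel_measurable M"
    and v0: "\<And>\<omega>. 0 \<le> v \<omega>" and vb: "\<And>\<omega>. v \<omega> \<le> Vb"
    and km[measurable]: "k \<in> borel_measurable borel" and k0: "\<And>r. 0 \<le> k r" and kb: "\<And>r. k r \<le> Kb"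
  shows "ennreal (\<integral>\<omega>. v \<omega> * k (Z \<omega>) * indicator {..\<delta>} (Z \<omega>) \<partial>M)
    = (\<integral>\<^sup>+t. ennreal (\<integral>\<omega>. v \<omega> * indicator {r. r \<le> \<delta> \<and> t < k r} (Z \<omega>) \<partial>M) * indicator {0..} t \<partial>lborel)"
proof -
  interpret PS: pair_sigma_finite M lborel ..
  have Vb0: "0 \<le> Vb" using v0 vb by (meson order_trans)
  have Kb0: "0 \<le> Kb" using k0 kb by (meson order_trans)
  define f where "f \<omega> t = ennreal (v \<omega> * (if Z \<omega> \<le> \<delta> \<and> t < k (Z \<omega>) then 1 else 0) * (if 0 \<le> t then 1 else 0))" for \<omega> t
  have fm: "case_prod f \<in> borel_measurable (M \<Otimes>\<^sub>M lborel)"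
    unfolding f_def by measurable
  have a: "(\<integral>\<^sup>+t. f \<omega> t \<partial>lborel) = ennreal (v \<omega> * k (Z \<omega>) * indicator {..\<delta>} (Z \<omega>))" for \<omega>
  proof -
    have "(\<lambda>t. f \<omega> t) = (\<lambda>t. ennreal (v \<omega> * indicator {..\<delta>} (Z \<omega>)) * indicator {0..<k (Z \<omega>)} t)"
      by (auto simp: f_def fun_eq_iff split: split_indicator)
    then have "(\<integral>\<^sup>+t. f \<omega> t \<partial>lborel) = ennreal (v \<omega> * indicator {..\<delta>} (Z \<omega>)) * emeasure lborel {0..<k (Z \<omega>)}"
      by (simp add: nn_integral_cmult_indicator)
    also have "\<dots> = ennreal (v \<omega> * k (Z \<omega>) * indicator {..\<delta>} (Z \<omega>))"
      using k0[of "Z \<omega>"] v0[of \<omega>] by (simp add: ennreal_mult[symmetric] mult_ac split: split_indicator)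
    finally show ?thesis .
  qed
  have b: "(\<integral>\<^sup>+\<omega>. f \<omega> t \<partial>M) = ennreal (\<integral>\<omega>. v \<omega> * indicator {r. r \<le> \<delta> \<and> t < k r} (Z \<omega>) \<partial>M) * indicator {0..} t" for t
  proof (cases "0 \<le> t")
    case True
    have "(\<integral>\<^sup>+\<omega>. f \<omega> t \<partial>M) = (\<integral>\<^sup>+\<omega>. ennreal (v \<omega> * indicator {r. r \<le> \<delta> \<and> t < k r} (Z \<omega>)) \<partial>M)"
      using True by (intro nn_integral_cong) (auto simp: f_def split: split_indicator)
    also have "\<dots> = ennreal (\<integral>\<omega>. v \<omega> * indicator {r. r \<le> \<delta> \<and> t < k r} (Z \<omega>) \<partial>M)"
    proof (rule nn_integral_eq_integral)
      have [measurable]: "{r. r \<le> \<delta> \<and> t < k r} \<in> sets borel" by measurable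
      show "integrable M (\<lambda>\<omega>. v \<omega> * indicator {r. r \<le> \<delta> \<and> t < k r} (Z \<omega>))"
        by (rule bounded_integrable[where C=Vb]) (use v0 vb Vb0 in \<open>auto split: split_indicator\<close>)
    qed (use v0 in \<open>auto split: split_indicator\<close>)
    finally show ?thesis using True by simp
  next
    case False then show ?thesis by (simp add: f_def)
  qed
  have "ennreal (\<integral>\<omega>. v \<omega> * k (Z \<omega>) * indicator {..\<delta>} (Z \<omega>) \<partial>M) = (\<integral>\<^sup>+\<omega>. ennreal (v \<omega> * k (Z \<omega>) * indicator {..\<delta>} (Z \<omega>)) \<partial>M)"
  proof (rule nn_integral_eq_integral[symmetric])
    show "integrable M (\<lambda>\<omega>. v \<omega> * k (Z \<omega>) * indicator {..\<delta>} (Z \<omega>))"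
    proof (rule bounded_integrable[where C="Vb * Kb"])
      fix \<omega>
      have "v \<omega> * k (Z \<omega>) \<le> Vb * Kb" using v0 vb k0 kb Vb0 by (intro mult_mono) auto
      then show "\<bar>v \<omega> * k (Z \<omega>) * indicator {..\<delta>} (Z \<omega>)\<bar> \<le> Vb * Kb"
        using v0[of \<omega>] k0[of "Z \<omega>"] Vb0 Kb0 by (auto split: split_indicator)
    qed measurable
  qed (use v0 k0 in \<open>auto split: split_indicator\<close>)
  also have "\<dots> = (\<integral>\<^sup>+\<omega>. (\<integral>\<^sup>+t. f \<omega> t \<partial>lborel) \<partial>M)" by (simp add: a)
  also have "\<dots> = (\<integral>\<^sup>+t. (\<integral>\<^sup>+\<omega>. f \<omega> t \<partial>M) \<partial>lborel)" by (rule PS.Fubini'[OF fm, symmetric])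
  also have "\<dots> = (\<integral>\<^sup>+t. ennreal (\<integral>\<omega>. v \<omega> * indicator {r. r \<le> \<delta> \<and> t < k r} (Z \<omega>) \<partial>M) * indicator {0..} t \<partial>lborel)"
    by (simp add: b)
  finally show ?thesis .
qed

lemma layer_cake_cmp:
  fixes w Z :: "'m \<Rightarrow> real" and k :: "real \<Rightarrow> real"
  assumes wm[measurable]: "w \<in> borel_measurable M" and Zm[measurable]: "Z \<in> borel_measurable M"
    and w0: "\<And>\<omega>. 0 \<le> w \<omega>" and wb: "\<And>\<omega>. w \<omega> \<le> Wb"
    and km[measurable]: "k \<in> borel_measurable borel" and k0: "\<And>r. 0 \<le> k r" and kb: "\<And>r. k r \<le> Kb"
    and kmono: "\<And>s t. s \<le> t \<Longrightarrow> k t \<le> k s" and eps: "0 \<le> \<epsilon>"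
    and hyp: "\<And>s. s \<le> \<delta> \<Longrightarrow> (\<integral>\<omega>. w \<omega> * indicator {..s} (Z \<omega>) \<partial>M) \<le> \<epsilon> * prob {\<omega>\<in>space M. Z \<omega> \<le> s}"
  shows "(\<integral>\<omega>. w \<omega> * k (Z \<omega>) * indicator {..\<delta>} (Z \<omega>) \<partial>M) \<le> \<epsilon> * (\<integral>\<omega>. 1 * k (Z \<omega>) * indicator {..\<delta>} (Z \<omega>) \<partial>M)"
proof -
  define S where "S t = {r. r \<le> \<delta> \<and> t < k r}" for t
  have wb': "\<bar>w \<omega>\<bar> \<le> Wb" for \<omega> using w0 wb by (simp add: abs_of_nonneg)
  have per_t: "(\<integral>\<omega>. w \<omega> * indicator (S t) (Z \<omega>) \<partial>M) \<le> \<epsilon> * (\<integral>\<omega>. (1::real) * indicator (S t) (Z \<omega>) \<partial>M)" for t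
  proof -
    have "(\<integral>\<omega>. w \<omega> * indicator (S t) (Z \<omega>) \<partial>M) \<le> \<epsilon> * (\<integral>\<omega>. indicator (S t) (Z \<omega>) \<partial>M)"
    proof (rule downset_bound[OF wm Zm wb' _ _ hyp])
      fix r r' assume "r \<in> S t" "r' \<le> r"
      then show "r' \<in> S t" using kmono[of r' r] by (auto simp: S_def)
    qed (auto simp: S_def)
    then show ?thesis by simp
  qed
  have m1: "(\<lambda>t. ennreal (\<integral>\<omega>. (1::real) * indicator {r. r \<le> \<delta> \<and> t < k r} (Z \<omega>) \<partial>M) * indicator {0..} t) \<in> borel_measurable lborel"
  proof -
    have e: "(\<lambda>t. (\<integral>\<omega>. (1::real) * indicator {r. r \<le> \<delta> \<and> t < k r} (Z \<omega>) \<partial>M)) = (\<lambda>t. (\<integral>\<omega>. (if Z \<omega> \<le> \<delta> \<and> t < k (Z \<omega>) then 1 else 0) \<partial>M))"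
      by (intro ext Bochner_Integration.integral_cong refl) (auto split: split_indicator)
    have "(\<lambda>t. (\<integral>\<omega>. (if Z \<omega> \<le> \<delta> \<and> t < k (Z \<omega>) then 1 else 0::real) \<partial>M)) \<in> borel_measurable borel"
      by measurable
    then show ?thesis unfolding e by measurable
  qed
  have "ennreal (\<integral>\<omega>. w \<omega> * k (Z \<omega>) * indicator {..\<delta>} (Z \<omega>) \<partial>M)
    = (\<integral>\<^sup>+t. ennreal (\<integral>\<omega>. w \<omega> * indicator {r. r \<le> \<delta> \<and> t < k r} (Z \<omega>) \<partial>M) * indicator {0..} t \<partial>lborel)"
    by (rule layer_id[OF wm Zm w0 wb km k0 kb])
  also have "\<dots> \<le> (\<integral>\<^sup>+t. ennreal \<epsilon> * (ennreal (\<integral>\<omega>. (1::real) * indicator {r. r \<le> \<delta> \<and> t < k r} (Z \<omega>) \<partial>M) * indicator {0..} t) \<partial>lborel)"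
  proof (intro nn_integral_mono)
    fix t
    have i0: "0 \<le> (\<integral>\<omega>. (1::real) * indicator {r. r \<le> \<delta> \<and> t < k r} (Z \<omega>) \<partial>M)"
      by (intro integral_nonneg_AE) (auto split: split_indicator)
    have "ennreal (\<integral>\<omega>. w \<omega> * indicator {r. r \<le> \<delta> \<and> t < k r} (Z \<omega>) \<partial>M)
        \<le> ennreal (\<epsilon> * (\<integral>\<omega>. (1::real) * indicator {r. r \<le> \<delta> \<and> t < k r} (Z \<omega>) \<partial>M))"
      using per_t[of t] unfolding S_def by (rule ennreal_leI)
    also have "\<dots> = ennreal \<epsilon> * ennreal (\<integral>\<omega>. (1::real) * indicator {r. r \<le> \<delta> \<and> t < k r} (Z \<omega>) \<partial>M)"
      using eps i0 by (rule ennreal_mult)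
    finally show "ennreal (\<integral>\<omega>. w \<omega> * indicator {r. r \<le> \<delta> \<and> t < k r} (Z \<omega>) \<partial>M) * indicator {0..} t
      \<le> ennreal \<epsilon> * (ennreal (\<integral>\<omega>. (1::real) * indicator {r. r \<le> \<delta> \<and> t < k r} (Z \<omega>) \<partial>M) * indicator {0..} t)"
      by (auto split: split_indicator)
  qed
  also have "\<dots> = ennreal \<epsilon> * (\<integral>\<^sup>+t. ennreal (\<integral>\<omega>. (1::real) * indicator {r. r \<le> \<delta> \<and> t < k r} (Z \<omega>) \<partial>M) * indicator {0..} t \<partial>lborel)"
    by (rule nn_integral_cmult[OF m1])
  also have "(\<integral>\<^sup>+t. ennreal (\<integral>\<omega>. (1::real) * indicator {r. r \<le> \<delta> \<and> t < k r} (Z \<omega>) \<partial>M) * indicator {0..} t \<partial>lborel)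
      = ennreal (\<integral>\<omega>. 1 * k (Z \<omega>) * indicator {..\<delta>} (Z \<omega>) \<partial>M)"
    by (rule layer_id[where Vb=1, symmetric]) (use k0 kb in auto)
  also have "ennreal \<epsilon> * ennreal (\<integral>\<omega>. 1 * k (Z \<omega>) * indicator {..\<delta>} (Z \<omega>) \<partial>M)
      = ennreal (\<epsilon> * (\<integral>\<omega>. 1 * k (Z \<omega>) * indicator {..\<delta>} (Z \<omega>) \<partial>M))"
    by (rule ennreal_mult[symmetric, OF eps]) (intro integral_nonneg_AE, use k0 in \<open>auto split: split_indicator\<close>)
  finally have "ennreal (\<integral>\<omega>. w \<omega> * k (Z \<omega>) * indicator {..\<delta>} (Z \<omega>) \<partial>M)
      \<le> ennreal (\<epsilon> * (\<integral>\<omega>. 1 * k (Z \<omega>) * indicator {..\<delta>} (Z \<omega>) \<partial>M))" .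
  moreover have "0 \<le> \<epsilon> * (\<integral>\<omega>. 1 * k (Z \<omega>) * indicator {..\<delta>} (Z \<omega>) \<partial>M)"
    using eps by (intro mult_nonneg_nonneg integral_nonneg_AE) (use k0 in \<open>auto split: split_indicator\<close>)
  ultimately show ?thesis by (simp add: ennreal_le_iff)
qed

lemma int_ind:
  fixes Z :: "'m \<Rightarrow> real"
  assumes [measurable]: "T \<in> sets borel" "Z \<in> borel_measurable M"
  shows "(\<integral>\<omega>. (indicator T (Z \<omega>) :: real) \<partial>M) = prob {\<omega>\<in>space M. Z \<omega> \<in> T}"
proof -
  have "(\<integral>\<omega>. (indicator T (Z \<omega>) :: real) \<partial>M) = (\<integral>\<omega>. indicator {\<omega>\<in>space M. Z \<omega> \<in> T} \<omega> \<partial>M)"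
    by (intro Bochner_Integration.integral_cong) (auto split: split_indicator)
  then show ?thesis by (simp add: Int_absorb2)
qed

lemma countable_decomp:
  fixes f Z :: "'m \<Rightarrow> real"
  assumes fm[measurable]: "f \<in> borel_measurable M" and Zm[measurable]: "Z \<in> borel_measurable M"
    and f0: "\<And>\<omega>. 0 \<le> f \<omega>" and fb: "\<And>\<omega>. f \<omega> \<le> Fb" and A: "countable A"
  shows "ennreal (\<integral>\<omega>. f \<omega> * indicator A (Z \<omega>) \<partial>M)
     = (\<integral>\<^sup>+r. ennreal (\<integral>\<omega>. f \<omega> * indicator {r} (Z \<omega>) \<partial>M) \<partial>count_space A)"
proof -
  have Fb0: "0 \<le> Fb" using f0 fb by (meson order_trans)
  let ?N = "distr (density M (\<lambda>\<omega>. ennreal (f \<omega>))) borel Z"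
  have e: "emeasure ?N S = ennreal (\<integral>\<omega>. f \<omega> * indicator S (Z \<omega>) \<partial>M)" if S[measurable]: "S \<in> sets borel" for S
  proof -
    have "emeasure ?N S = emeasure (density M (\<lambda>\<omega>. ennreal (f \<omega>))) (Z -` S \<inter> space M)"
      by (subst emeasure_distr) auto
    also have "\<dots> = (\<integral>\<^sup>+\<omega>. ennreal (f \<omega>) * indicator (Z -` S \<inter> space M) \<omega> \<partial>M)"
      by (rule emeasure_density) auto
    also have "\<dots> = (\<integral>\<^sup>+\<omega>. ennreal (f \<omega> * indicator S (Z \<omega>)) \<partial>M)"
      by (intro nn_integral_cong) (auto split: split_indicator)
    also have "\<dots> = ennreal (\<integral>\<omega>. f \<omega> * indicator S (Z \<omega>) \<partial>M)"
    proof (rule nn_integral_eq_integral)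
      show "integrable M (\<lambda>\<omega>. f \<omega> * indicator S (Z \<omega>))"
        by (rule bounded_integrable[where C=Fb]) (use f0 fb Fb0 in \<open>auto split: split_indicator\<close>)
    qed (use f0 in \<open>auto split: split_indicator\<close>)
    finally show ?thesis .
  qed
  have As: "A \<in> sets borel" by (rule sets.countable[OF _ A]) auto
  have "ennreal (\<integral>\<omega>. f \<omega> * indicator A (Z \<omega>) \<partial>M) = emeasure ?N A" using e[OF As] by simp
  also have "\<dots> = (\<integral>\<^sup>+r. emeasure ?N {r} \<partial>count_space A)"
    by (rule emeasure_countable_singleton[OF _ A]) auto
  also have "\<dots> = (\<integral>\<^sup>+r. ennreal (\<integral>\<omega>. f \<omega> * indicator {r} (Z \<omega>) \<partial>M) \<partial>count_space A)"
    by (intro nn_integral_cong e) auto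
  finally show ?thesis .
qed

lemma atom_phi:
  assumes m1: "m \<ge> 1" and A: "Aset \<subseteq> Atoms" and C0: "0 \<le> C"
    and hB: "\<And>r. r \<in> Aset \<Longrightarrow> (\<integral>\<omega>. phi (NN m \<omega>) * indicator {r} (Ds m \<omega>) \<partial>M)
                 \<le> C * kk m r * (\<integral>\<omega>. phi (Y 0 \<omega>) * indicator {r} (D 0 \<omega>) \<partial>M)"
  shows "(\<integral>\<omega>. phi (NN m \<omega>) * indicator Aset (Ds m \<omega>) \<partial>M)
     \<le> C * (\<integral>\<omega>. phi (Y 0 \<omega>) * kk m (D 0 \<omega>) * indicator Aset (D 0 \<omega>) \<partial>M)"
proof -
  note NN_meas[OF m1, measurable] Ds_meas[OF m1, measurable] kk_meas[OF m1, measurable]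
  have cA: "countable Aset" using countable_Atoms A by (rule countable_subset[rotated])
  have i0: "0 \<le> (\<integral>\<omega>. phi (Y 0 \<omega>) * kk m (D 0 \<omega>) * indicator T (D 0 \<omega>) \<partial>M)" for T
    by (intro integral_nonneg_AE AE_I2 mult_nonneg_nonneg phi_nonneg kk_nonneg[OF m1]) auto
  have bnd: "phi (Y 0 \<omega>) * kk m (D 0 \<omega>) \<le> 2 * B * real m" for \<omega>
    using phi_le phi_nonneg kk_le[OF m1] kk_nonneg[OF m1] B_nonneg by (intro mult_mono) auto
  have "ennreal (\<integral>\<omega>. phi (NN m \<omega>) * indicator Aset (Ds m \<omega>) \<partial>M)
     = (\<integral>\<^sup>+r. ennreal (\<integral>\<omega>. phi (NN m \<omega>) * indicator {r} (Ds m \<omega>) \<partial>M) \<partial>count_space Aset)"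
    by (rule countable_decomp[where Fb="2*B"]) (use phi_nonneg phi_le cA in auto)
  also have "\<dots> \<le> (\<integral>\<^sup>+r. ennreal C * ennreal (\<integral>\<omega>. phi (Y 0 \<omega>) * kk m (D 0 \<omega>) * indicator {r} (D 0 \<omega>) \<partial>M) \<partial>count_space Aset)"
  proof (intro nn_integral_mono)
    fix r assume "r \<in> space (count_space Aset)"
    then have r: "r \<in> Aset" by simp
    have "(\<integral>\<omega>. phi (Y 0 \<omega>) * kk m (D 0 \<omega>) * indicator {r} (D 0 \<omega>) \<partial>M)
        = (\<integral>\<omega>. kk m r * (phi (Y 0 \<omega>) * indicator {r} (D 0 \<omega>)) \<partial>M)"
      by (intro Bochner_Integration.integral_cong refl) (auto split: split_indicator)
    also have "\<dots> = kk m r * (\<integral>\<omega>. phi (Y 0 \<omega>) * indicator {r} (D 0 \<omega>) \<partial>M)" by simp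
    finally have eq: "(\<integral>\<omega>. phi (Y 0 \<omega>) * kk m (D 0 \<omega>) * indicator {r} (D 0 \<omega>) \<partial>M)
        = kk m r * (\<integral>\<omega>. phi (Y 0 \<omega>) * indicator {r} (D 0 \<omega>) \<partial>M)" .
    have "ennreal (\<integral>\<omega>. phi (NN m \<omega>) * indicator {r} (Ds m \<omega>) \<partial>M)
       \<le> ennreal (C * (\<integral>\<omega>. phi (Y 0 \<omega>) * kk m (D 0 \<omega>) * indicator {r} (D 0 \<omega>) \<partial>M))"
      using hB[OF r] unfolding eq by (intro ennreal_leI) (simp add: mult_ac)
    also have "\<dots> = ennreal C * ennreal (\<integral>\<omega>. phi (Y 0 \<omega>) * kk m (D 0 \<omega>) * indicator {r} (D 0 \<omega>) \<partial>M)"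
      using C0 i0 by (rule ennreal_mult)
    finally show "ennreal (\<integral>\<omega>. phi (NN m \<omega>) * indicator {r} (Ds m \<omega>) \<partial>M)
       \<le> ennreal C * ennreal (\<integral>\<omega>. phi (Y 0 \<omega>) * kk m (D 0 \<omega>) * indicator {r} (D 0 \<omega>) \<partial>M)" .
  qed
  also have "\<dots> = ennreal C * (\<integral>\<^sup>+r. ennreal (\<integral>\<omega>. phi (Y 0 \<omega>) * kk m (D 0 \<omega>) * indicator {r} (D 0 \<omega>) \<partial>M) \<partial>count_space Aset)"
    by (rule nn_integral_cmult) simp
  also have "(\<integral>\<^sup>+r. ennreal (\<integral>\<omega>. phi (Y 0 \<omega>) * kk m (D 0 \<omega>) * indicator {r} (D 0 \<omega>) \<partial>M) \<partial>count_space Aset)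
      = ennreal (\<integral>\<omega>. phi (Y 0 \<omega>) * kk m (D 0 \<omega>) * indicator Aset (D 0 \<omega>) \<partial>M)"
    by (rule countable_decomp[where Fb="2*B*real m", symmetric])
       (use bnd cA phi_nonneg kk_nonneg[OF m1] in auto)
  also have "ennreal C * ennreal (\<integral>\<omega>. phi (Y 0 \<omega>) * kk m (D 0 \<omega>) * indicator Aset (D 0 \<omega>) \<partial>M)
     = ennreal (C * (\<integral>\<omega>. phi (Y 0 \<omega>) * kk m (D 0 \<omega>) * indicator Aset (D 0 \<omega>) \<partial>M))"
    using C0 i0 by (rule ennreal_mult[symmetric])
  finally show ?thesis using C0 i0 by (simp add: ennreal_le_iff)
qed

lemma atom_mass:
  assumes m1: "m \<ge> 1"
  shows "(\<integral>\<omega>. kk m (D 0 \<omega>) * indicator Atoms (D 0 \<omega>) \<partial>M) \<le> 1"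
proof -
  note Ds_meas[OF m1, measurable] kk_meas[OF m1, measurable]
  have "ennreal (\<integral>\<omega>. kk m (D 0 \<omega>) * indicator Atoms (D 0 \<omega>) \<partial>M)
     = (\<integral>\<^sup>+r. ennreal (\<integral>\<omega>. kk m (D 0 \<omega>) * indicator {r} (D 0 \<omega>) \<partial>M) \<partial>count_space Atoms)"
    by (rule countable_decomp[where Fb="real m"]) (use kk_nonneg[OF m1] kk_le[OF m1] countable_Atoms in auto)
  also have "\<dots> = (\<integral>\<^sup>+r. ennreal (\<integral>\<omega>. (1::real) * indicator {r} (Ds m \<omega>) \<partial>M) \<partial>count_space Atoms)"
  proof (intro nn_integral_cong arg_cong[where f=ennreal])
    fix r assume "r \<in> space (count_space Atoms)"
    then have pr: "0 < pa r" by (simp add: Atoms_def)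
    have "(\<integral>\<omega>. kk m (D 0 \<omega>) * indicator {r} (D 0 \<omega>) \<partial>M) = (\<integral>\<omega>. kk m r * indicator {r} (D 0 \<omega>) \<partial>M)"
      by (intro Bochner_Integration.integral_cong refl) (auto split: split_indicator)
    also have "\<dots> = kk m r * pa r" using int_ind[of "{r}" "D 0"] by (simp add: pa_def)
    also have "\<dots> = prob {\<omega>\<in>space M. Ds m \<omega> = r}" using pr by (simp add: kk_def)
    also have "\<dots> = (\<integral>\<omega>. (1::real) * indicator {r} (Ds m \<omega>) \<partial>M)" using int_ind[of "{r}" "Ds m"] by simp
    finally show "(\<integral>\<omega>. kk m (D 0 \<omega>) * indicator {r} (D 0 \<omega>) \<partial>M) = (\<integral>\<omega>. (1::real) * indicator {r} (Ds m \<omega>) \<partial>M)" .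
  qed
  also have "\<dots> = ennreal (\<integral>\<omega>. (1::real) * indicator Atoms (Ds m \<omega>) \<partial>M)"
    by (rule countable_decomp[where Fb=1, symmetric]) (use countable_Atoms in auto)
  also have "(\<integral>\<omega>. (1::real) * indicator Atoms (Ds m \<omega>) \<partial>M) \<le> 1"
    using int_ind[of Atoms "Ds m"] by simp
  then have "ennreal (\<integral>\<omega>. (1::real) * indicator Atoms (Ds m \<omega>) \<partial>M) \<le> ennreal 1" by (rule ennreal_leI)
  finally have "ennreal (\<integral>\<omega>. kk m (D 0 \<omega>) * indicator Atoms (D 0 \<omega>) \<partial>M) \<le> ennreal 1" by simp
  then show ?thesis by (simp add: ennreal_le_iff)
qed

lemma Ds_nonneg: "0 \<le> Ds m \<omega>" unfolding Ds_def by simp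
lemma D_nonneg: "0 \<le> D i \<omega>" unfolding D_def by simp

lemma near_bound:
  assumes m: "m \<ge> 2" and C0: "0 \<le> C" and \<delta>: "0 < \<delta>" and eps: "0 \<le> \<epsilon>"
    and hB: "\<And>r. r \<in> Atoms \<Longrightarrow> 0 < r \<Longrightarrow> r \<le> \<delta> \<Longrightarrow> (\<integral>\<omega>. phi (NN m \<omega>) * indicator {r} (Ds m \<omega>) \<partial>M)
                 \<le> C * kk m r * (\<integral>\<omega>. phi (Y 0 \<omega>) * indicator {r} (D 0 \<omega>) \<partial>M)"
    and Leb: "\<And>s. 0 < s \<Longrightarrow> s \<le> \<delta> \<Longrightarrow> (\<integral>\<omega>. phi (Y 0 \<omega>) * indicator {..s} (D 0 \<omega>) \<partial>M) \<le> \<epsilon> * F s"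
  shows "(\<integral>\<omega>. phi (NN m \<omega>) * indicator {..\<delta>} (Ds m \<omega>) \<partial>M) \<le> max C 1 * \<epsilon> * 2"
proof -
  have m1: "m \<ge> 1" using m by simp
  note NN_meas[OF m1, measurable] Ds_meas[OF m1, measurable] kk_meas[OF m1, measurable]
  define A1 where "A1 = Atoms \<inter> {0<..\<delta>}"
  define B1 where "B1 = {..\<delta>} - Atoms"
  have A1m[measurable]: "A1 \<in> sets borel" unfolding A1_def by measurable
  have B1m[measurable]: "B1 \<in> sets borel" unfolding B1_def by measurable
  have bNN: "\<bar>phi (NN m \<omega>) * indicator T (Ds m \<omega>)\<bar> \<le> 2 * B" for T \<omega>
    using phi_le phi_nonneg B_nonneg by (auto split: split_indicator)
  have bY: "\<bar>phi (Y 0 \<omega>) * kk m (D 0 \<omega>) * indicator T (D 0 \<omega>)\<bar> \<le> 2 * B * real m" for T \<omega>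
  proof -
    have "phi (Y 0 \<omega>) * kk m (D 0 \<omega>) \<le> 2 * B * real m"
      using phi_le phi_nonneg kk_le[OF m1] kk_nonneg[OF m1] B_nonneg by (intro mult_mono) auto
    then show ?thesis using phi_nonneg[of "Y 0 \<omega>"] kk_nonneg[OF m1, of "D 0 \<omega>"] B_nonneg
      by (auto split: split_indicator)
  qed
  have intNN: "integrable M (\<lambda>\<omega>. phi (NN m \<omega>) * indicator T (Ds m \<omega>))" if [measurable]: "T \<in> sets borel" for T
    by (rule bounded_integrable[OF _ bNN]) measurable
  have intY: "integrable M (\<lambda>\<omega>. phi (Y 0 \<omega>) * kk m (D 0 \<omega>) * indicator T (D 0 \<omega>))" if [measurable]: "T \<in> sets borel" for T
    by (rule bounded_integrable[OF _ bY]) measurable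
  have intK: "integrable M (\<lambda>\<omega>. kk m (D 0 \<omega>) * indicator T (D 0 \<omega>))" if [measurable]: "T \<in> sets borel" for T
    by (rule bounded_integrable[where C="real m"]) (use kk_le[OF m1] kk_nonneg[OF m1] in \<open>auto split: split_indicator\<close>)
  have split: "phi (NN m \<omega>) * indicator {..\<delta>} (Ds m \<omega>) = phi (NN m \<omega>) * indicator A1 (Ds m \<omega>) + phi (NN m \<omega>) * indicator B1 (Ds m \<omega>)"
    for \<omega>
  proof (cases "Ds m \<omega> = 0")
    case True
    then have "NN m \<omega> = x" unfolding Ds_def by simp
    then show ?thesis by (simp add: phi_x)
  next
    case False
    then have "0 < Ds m \<omega>" using Ds_nonneg[of m \<omega>] by simp
    then show ?thesis by (auto simp: A1_def B1_def split: split_indicator)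
  qed
  define IA where "IA = (\<integral>\<omega>. phi (Y 0 \<omega>) * kk m (D 0 \<omega>) * indicator A1 (D 0 \<omega>) \<partial>M)"
  define IB where "IB = (\<integral>\<omega>. phi (Y 0 \<omega>) * kk m (D 0 \<omega>) * indicator B1 (D 0 \<omega>) \<partial>M)"
  define I where "I = (\<integral>\<omega>. phi (Y 0 \<omega>) * kk m (D 0 \<omega>) * indicator {..\<delta>} (D 0 \<omega>) \<partial>M)"
  define K where "K = (\<integral>\<omega>. 1 * kk m (D 0 \<omega>) * indicator {..\<delta>} (D 0 \<omega>) \<partial>M)"
  have a0: "0 \<le> (\<integral>\<omega>. phi (Y 0 \<omega>) * kk m (D 0 \<omega>) * indicator T (D 0 \<omega>) \<partial>M)" for T
    by (intro integral_nonneg_AE AE_I2) (use phi_nonneg kk_nonneg[OF m1] in \<open>auto split: split_indicator\<close>)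
  have s1: "(\<integral>\<omega>. phi (NN m \<omega>) * indicator {..\<delta>} (Ds m \<omega>) \<partial>M) \<le> C * IA + IB"
  proof -
    have "(\<integral>\<omega>. phi (NN m \<omega>) * indicator {..\<delta>} (Ds m \<omega>) \<partial>M)
        = (\<integral>\<omega>. phi (NN m \<omega>) * indicator A1 (Ds m \<omega>) \<partial>M) + (\<integral>\<omega>. phi (NN m \<omega>) * indicator B1 (Ds m \<omega>) \<partial>M)"
      unfolding split by (rule Bochner_Integration.integral_add) (auto intro!: intNN)
    also have "\<dots> \<le> C * IA + (\<integral>\<omega>. phi (Y 0 \<omega>) * indicator B1 (D 0 \<omega>) * kk m (D 0 \<omega>) \<partial>M)"
    proof (rule add_mono)
      show "(\<integral>\<omega>. phi (NN m \<omega>) * indicator A1 (Ds m \<omega>) \<partial>M) \<le> C * IA"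
        unfolding IA_def by (rule atom_phi[OF m1 _ C0]) (auto simp: A1_def intro!: hB)
      show "(\<integral>\<omega>. phi (NN m \<omega>) * indicator B1 (Ds m \<omega>) \<partial>M) \<le> (\<integral>\<omega>. phi (Y 0 \<omega>) * indicator B1 (D 0 \<omega>) * kk m (D 0 \<omega>) \<partial>M)"
        by (rule nonatom_phi[OF m B1m]) (auto simp: B1_def)
    qed
    also have "(\<integral>\<omega>. phi (Y 0 \<omega>) * indicator B1 (D 0 \<omega>) * kk m (D 0 \<omega>) \<partial>M) = IB"
      unfolding IB_def by (simp add: mult_ac)
    finally show ?thesis .
  qed
  have s2: "C * IA + IB \<le> max C 1 * (IA + IB)"
  proof -
    have "C * IA \<le> max C 1 * IA" using a0[of A1] unfolding IA_def by (intro mult_right_mono) auto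
    moreover have "1 * IB \<le> max C 1 * IB" using a0[of B1] unfolding IB_def by (intro mult_right_mono) auto
    ultimately show ?thesis by (simp add: distrib_left)
  qed
  have s3: "IA + IB \<le> I"
  proof -
    have "IA + IB = (\<integral>\<omega>. phi (Y 0 \<omega>) * kk m (D 0 \<omega>) * indicator A1 (D 0 \<omega>) + phi (Y 0 \<omega>) * kk m (D 0 \<omega>) * indicator B1 (D 0 \<omega>) \<partial>M)"
      unfolding IA_def IB_def by (rule Bochner_Integration.integral_add[symmetric]) (auto intro!: intY)
    also have "\<dots> \<le> I"
      unfolding I_def
    proof (rule integral_mono)
      show "integrable M (\<lambda>\<omega>. phi (Y 0 \<omega>) * kk m (D 0 \<omega>) * indicator A1 (D 0 \<omega>) + phi (Y 0 \<omega>) * kk m (D 0 \<omega>) * indicator B1 (D 0 \<omega>))"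
        by (auto intro!: intY)
      show "integrable M (\<lambda>\<omega>. phi (Y 0 \<omega>) * kk m (D 0 \<omega>) * indicator {..\<delta>} (D 0 \<omega>))" by (auto intro!: intY)
      fix \<omega>
      show "phi (Y 0 \<omega>) * kk m (D 0 \<omega>) * indicator A1 (D 0 \<omega>) + phi (Y 0 \<omega>) * kk m (D 0 \<omega>) * indicator B1 (D 0 \<omega>)
          \<le> phi (Y 0 \<omega>) * kk m (D 0 \<omega>) * indicator {..\<delta>} (D 0 \<omega>)"
        using phi_nonneg[of "Y 0 \<omega>"] kk_nonneg[OF m1, of "D 0 \<omega>"]
        by (auto simp: A1_def B1_def split: split_indicator)
    qed
    finally show ?thesis .
  qed
  have s4: "I \<le> \<epsilon> * K"
    unfolding I_def K_def
  proof (rule layer_cake_cmp[where Wb="2*B" and Kb="real m"])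
    show "phi (Y 0 \<omega>) \<le> 2 * B" for \<omega> by (rule phi_le)
    show "kk m r \<le> real m" for r by (rule kk_le[OF m1])
    show "s \<le> t \<Longrightarrow> kk m t \<le> kk m s" for s t by (rule kk_mono[OF m1])
    fix s assume s: "s \<le> \<delta>"
    show "(\<integral>\<omega>. phi (Y 0 \<omega>) * indicator {..s} (D 0 \<omega>) \<partial>M) \<le> \<epsilon> * prob {\<omega> \<in> space M. D 0 \<omega> \<le> s}"
    proof (cases "0 < s")
      case True then show ?thesis using Leb[OF True s] by (simp add: F_def)
    next
      case False
      have "(\<integral>\<omega>. phi (Y 0 \<omega>) * indicator {..s} (D 0 \<omega>) \<partial>M) = (\<integral>\<omega>. 0 \<partial>M)"
      proof (intro Bochner_Integration.integral_cong refl)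
        fix \<omega>
        show "phi (Y 0 \<omega>) * indicator {..s} (D 0 \<omega>) = 0"
        proof (cases "D 0 \<omega> \<le> s")
          case True
          then have "D 0 \<omega> = 0" using False D_nonneg[of 0 \<omega>] by simp
          then have "Y 0 \<omega> = x" unfolding D_def by simp
          then show ?thesis by (simp add: phi_x)
        qed simp
      qed
      then show ?thesis using eps by simp
    qed
  qed (use phi_nonneg kk_nonneg[OF m1] eps in auto)
  have s5: "K \<le> 2"
  proof -
    have "K \<le> (\<integral>\<omega>. kk m (D 0 \<omega>) * indicator Atoms (D 0 \<omega>) + indicator (- Atoms) (D 0 \<omega>) * kk m (D 0 \<omega>) \<partial>M)"
      unfolding K_def
    proof (rule integral_mono)
      show "integrable M (\<lambda>\<omega>. 1 * kk m (D 0 \<omega>) * indicator {..\<delta>} (D 0 \<omega>))" using intK[of "{..\<delta>}"] by simp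
      show "integrable M (\<lambda>\<omega>. kk m (D 0 \<omega>) * indicator Atoms (D 0 \<omega>) + indicator (- Atoms) (D 0 \<omega>) * kk m (D 0 \<omega>))"
        using intK[of Atoms] intK[of "- Atoms"] by (auto simp: mult_ac)
      fix \<omega> show "1 * kk m (D 0 \<omega>) * indicator {..\<delta>} (D 0 \<omega>) \<le> kk m (D 0 \<omega>) * indicator Atoms (D 0 \<omega>) + indicator (- Atoms) (D 0 \<omega>) * kk m (D 0 \<omega>)"
        using kk_nonneg[OF m1, of "D 0 \<omega>"] by (auto split: split_indicator)
    qed
    also have "\<dots> = (\<integral>\<omega>. kk m (D 0 \<omega>) * indicator Atoms (D 0 \<omega>) \<partial>M) + (\<integral>\<omega>. indicator (- Atoms) (D 0 \<omega>) * kk m (D 0 \<omega>) \<partial>M)"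
      by (rule Bochner_Integration.integral_add) (use intK[of Atoms] intK[of "- Atoms"] in \<open>auto simp: mult_ac\<close>)
    also have "\<dots> \<le> 1 + 1"
      by (intro add_mono atom_mass[OF m1] nonatom_mass[OF m]) auto
    finally show ?thesis by simp
  qed
  have mx: "0 \<le> max C 1" by simp
  have "IA + IB \<le> \<epsilon> * 2"
    using s3 s4 s5 mult_left_mono[OF s5 eps] by linarith
  then have "max C 1 * (IA + IB) \<le> max C 1 * (\<epsilon> * 2)" by (rule mult_left_mono[OF _ mx])
  then show ?thesis using s1 s2 by (simp add: mult_ac)
qed

lemma hB_of:
  assumes C0: "0 \<le> C" and m1: "m \<ge> 1" and pr: "0 < pa r"
    and cB: "(\<integral>\<omega>. phi (NN m \<omega>) * indicator {r} (Ds m \<omega>) \<partial>M) / prob {\<omega>\<in>space M. Ds m \<omega> = r}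
        \<le> C * ((\<integral>\<omega>. phi (Y 0 \<omega>) * indicator {r} (D 0 \<omega>) \<partial>M) / pa r)"
  shows "(\<integral>\<omega>. phi (NN m \<omega>) * indicator {r} (Ds m \<omega>) \<partial>M) \<le> C * kk m r * (\<integral>\<omega>. phi (Y 0 \<omega>) * indicator {r} (D 0 \<omega>) \<partial>M)"
proof -
  note NN_meas[OF m1, measurable] Ds_meas[OF m1, measurable]
  define a where "a = (\<integral>\<omega>. phi (NN m \<omega>) * indicator {r} (Ds m \<omega>) \<partial>M)"
  define b where "b = (\<integral>\<omega>. phi (Y 0 \<omega>) * indicator {r} (D 0 \<omega>) \<partial>M)"
  define q where "q = prob {\<omega>\<in>space M. Ds m \<omega> = r}"
  have b0: "0 \<le> b" unfolding b_def
    by (intro integral_nonneg_AE AE_I2) (use phi_nonneg in \<open>auto split: split_indicator\<close>)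
  have kk: "kk m r = q / pa r" using pr by (simp add: kk_def q_def)
  show ?thesis
  proof (cases "q > 0")
    case True
    have "a / q \<le> C * (b / pa r)" using cB by (simp add: a_def b_def q_def)
    then have "a \<le> C * (b / pa r) * q" using True by (simp add: pos_divide_le_eq)
    then show ?thesis using pr by (simp add: kk a_def[symmetric] b_def[symmetric] field_simps)
  next
    case False
    have "0 \<le> q" unfolding q_def by simp
    then have q0: "q = 0" using False by linarith
    have "a \<le> (\<integral>\<omega>. 2 * B * indicator {r} (Ds m \<omega>) \<partial>M)"
      unfolding a_def
    proof (rule integral_mono)
      show "integrable M (\<lambda>\<omega>. phi (NN m \<omega>) * indicator {r} (Ds m \<omega>))"
        by (rule bounded_integrable[where C="2*B"]) (use phi_le phi_nonneg B_nonneg in \<open>auto split: split_indicator\<close>)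
      show "integrable M (\<lambda>\<omega>. 2 * B * indicator {r} (Ds m \<omega>))"
        by (rule bounded_integrable[where C="2*B"]) (use B_nonneg in \<open>auto split: split_indicator\<close>)
    qed (use phi_le in \<open>auto split: split_indicator\<close>)
    also have "\<dots> = 2 * B * q" using int_ind[of "{r}" "Ds m"] by (simp add: q_def)
    finally have "a \<le> 0" using q0 by simp
    moreover have "0 \<le> C * kk m r * b" using C0 kk_nonneg[OF m1] b0 by simp
    ultimately show ?thesis by (simp add: a_def b_def)
  qed
qed

lemma far_bound:
  assumes m1: "m \<ge> 1"
  shows "(\<integral>\<omega>. phi (NN m \<omega>) * indicator {\<delta><..} (Ds m \<omega>) \<partial>M) \<le> 2 * B * (1 - F \<delta>) ^ m"
proof -
  note NN_meas[OF m1, measurable] Ds_meas[OF m1, measurable]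
  have "(\<integral>\<omega>. phi (NN m \<omega>) * indicator {\<delta><..} (Ds m \<omega>) \<partial>M) \<le> (\<integral>\<omega>. 2 * B * indicator {\<delta><..} (Ds m \<omega>) \<partial>M)"
  proof (rule integral_mono)
    show "integrable M (\<lambda>\<omega>. phi (NN m \<omega>) * indicator {\<delta><..} (Ds m \<omega>))"
      by (rule bounded_integrable[where C="2*B"]) (use phi_le phi_nonneg B_nonneg in \<open>auto split: split_indicator\<close>)
    show "integrable M (\<lambda>\<omega>. 2 * B * indicator {\<delta><..} (Ds m \<omega>))"
      by (rule bounded_integrable[where C="2*B"]) (use B_nonneg in \<open>auto split: split_indicator\<close>)
  qed (use phi_le in \<open>auto split: split_indicator\<close>)
  also have "\<dots> = 2 * B * prob {\<omega>\<in>space M. Ds m \<omega> \<in> {\<delta><..}}" using int_ind[of "{\<delta><..}" "Ds m"] by simp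
  also have "{\<omega>\<in>space M. Ds m \<omega> \<in> {\<delta><..}} = {\<omega>\<in>space M. \<forall>j\<in>{1..m}. \<delta> < D j \<omega>}"
    using Ds_ge_iff(2)[OF m1] by auto
  also have "prob \<dots> = (1 - F \<delta>) ^ m" using prob_all_gt[of "{1..m}" \<delta>] by simp
  finally show ?thesis .
qed

lemma main_locale:
  assumes C0: "0 < C" and R0: "0 < R"
    and condB': "\<And>m r. m \<ge> M0 \<Longrightarrow> m \<ge> 1 \<Longrightarrow> 0 < r \<Longrightarrow> r < R \<Longrightarrow> 0 < pa r \<Longrightarrow>
        (\<integral>\<omega>. phi (NN m \<omega>) * indicator {r} (Ds m \<omega>) \<partial>M) / prob {\<omega>\<in>space M. Ds m \<omega> = r}
        \<le> C * ((\<integral>\<omega>. phi (Y 0 \<omega>) * indicator {r} (D 0 \<omega>) \<partial>M) / pa r)"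
    and supp: "\<And>r. 0 < r \<Longrightarrow> 0 < F r"
    and leb: "((\<lambda>r. (\<integral>\<omega>. phi (Y 0 \<omega>) * indicator {..r} (D 0 \<omega>) \<partial>M) / F r) \<longlongrightarrow> 0) (at_right 0)"
  shows "(\<lambda>m. \<integral>\<omega>. phi (NN m \<omega>) \<partial>M) \<longlonglongrightarrow> 0"
proof (rule LIMSEQ_I)
  fix e :: real assume e: "0 < e"
  define Cm where "Cm = max C 1"
  have Cm0: "0 < Cm" unfolding Cm_def by simp
  define \<epsilon> where "\<epsilon> = e / (4 * Cm)"
  have eps: "0 < \<epsilon>" unfolding \<epsilon>_def using e Cm0 by simp
  have "eventually (\<lambda>r. dist ((\<integral>\<omega>. phi (Y 0 \<omega>) * indicator {..r} (D 0 \<omega>) \<partial>M) / F r) 0 < \<epsilon>) (at_right 0)"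
    by (rule tendstoD[OF leb eps])
  then obtain b where b: "0 < b" and hb: "\<And>y. 0 < y \<Longrightarrow> y < b \<Longrightarrow> dist ((\<integral>\<omega>. phi (Y 0 \<omega>) * indicator {..y} (D 0 \<omega>) \<partial>M) / F y) 0 < \<epsilon>"
    unfolding eventually_at_right_field by auto
  define \<delta> where "\<delta> = min (b/2) (R/2)"
  have d0: "0 < \<delta>" "\<delta> < b" "\<delta> < R" unfolding \<delta>_def using b R0 by auto
  have Leb: "(\<integral>\<omega>. phi (Y 0 \<omega>) * indicator {..s} (D 0 \<omega>) \<partial>M) \<le> \<epsilon> * F s" if s: "0 < s" "s \<le> \<delta>" for s
  proof -
    have Fs: "0 < F s" using supp s by simp
    have "dist ((\<integral>\<omega>. phi (Y 0 \<omega>) * indicator {..s} (D 0 \<omega>) \<partial>M) / F s) 0 < \<epsilon>" using hb s d0 by simp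
    then have "\<bar>(\<integral>\<omega>. phi (Y 0 \<omega>) * indicator {..s} (D 0 \<omega>) \<partial>M) / F s\<bar> < \<epsilon>" by (simp add: dist_real_def)
    then have "(\<integral>\<omega>. phi (Y 0 \<omega>) * indicator {..s} (D 0 \<omega>) \<partial>M) / F s < \<epsilon>" by linarith
    then show ?thesis using Fs by (simp add: pos_divide_less_eq less_imp_le mult.commute)
  qed
  define q where "q = 1 - F \<delta>"
  have q: "0 \<le> q" "q < 1" unfolding q_def using F_le1[of \<delta>] supp[OF d0(1)] by auto
  have "(\<lambda>n. 2 * B * q ^ n) \<longlonglongrightarrow> 0"
    by (rule tendsto_mult_right_zero, rule LIMSEQ_power_zero) (use q in simp)
  then obtain N2 where N2: "\<And>n. n \<ge> N2 \<Longrightarrow> norm (2 * B * q ^ n - 0) < e / 2"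
    using LIMSEQ_D[of _ 0 "e/2"] e by (metis half_gt_zero)
  show "\<exists>no. \<forall>n\<ge>no. norm ((\<integral>\<omega>. phi (NN n \<omega>) \<partial>M) - 0) < e"
  proof (intro exI allI impI)
    fix n assume n: "max (max M0 2) N2 \<le> n"
    then have n2: "n \<ge> 2" and nM: "n \<ge> M0" and nN: "n \<ge> N2" by auto
    have n1: "n \<ge> 1" using n2 by simp
    note NN_meas[OF n1, measurable] Ds_meas[OF n1, measurable]
    have near: "(\<integral>\<omega>. phi (NN n \<omega>) * indicator {..\<delta>} (Ds n \<omega>) \<partial>M) \<le> max C 1 * \<epsilon> * 2"
    proof (rule near_bound[OF n2 _ d0(1) _ _ Leb])
      fix r assume r: "r \<in> Atoms" "0 < r" "r \<le> \<delta>"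
      show "(\<integral>\<omega>. phi (NN n \<omega>) * indicator {r} (Ds n \<omega>) \<partial>M) \<le> C * kk n r * (\<integral>\<omega>. phi (Y 0 \<omega>) * indicator {r} (D 0 \<omega>) \<partial>M)"
        using r d0 C0 by (intro hB_of condB' nM n1) (auto simp: Atoms_def)
    qed (use C0 eps in auto)
    have "max C 1 * \<epsilon> * 2 = e / 2" unfolding \<epsilon>_def Cm_def[symmetric] using Cm0 by (simp add: field_simps)
    then have near': "(\<integral>\<omega>. phi (NN n \<omega>) * indicator {..\<delta>} (Ds n \<omega>) \<partial>M) \<le> e / 2" using near by simp
    have far: "(\<integral>\<omega>. phi (NN n \<omega>) * indicator {\<delta><..} (Ds n \<omega>) \<partial>M) < e / 2"
      using far_bound[OF n1, of \<delta>] N2[OF nN] unfolding q_def by simp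
    have int: "integrable M (\<lambda>\<omega>. phi (NN n \<omega>) * indicator T (Ds n \<omega>))" if [measurable]: "T \<in> sets borel" for T
      by (rule bounded_integrable[where C="2*B"]) (use phi_le phi_nonneg B_nonneg in \<open>auto split: split_indicator\<close>)
    have "(\<integral>\<omega>. phi (NN n \<omega>) \<partial>M) = (\<integral>\<omega>. phi (NN n \<omega>) * indicator {..\<delta>} (Ds n \<omega>) + phi (NN n \<omega>) * indicator {\<delta><..} (Ds n \<omega>) \<partial>M)"
      by (intro Bochner_Integration.integral_cong refl) (auto split: split_indicator)
    also have "\<dots> = (\<integral>\<omega>. phi (NN n \<omega>) * indicator {..\<delta>} (Ds n \<omega>) \<partial>M) + (\<integral>\<omega>. phi (NN n \<omega>) * indicator {\<delta><..} (Ds n \<omega>) \<partial>M)"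
      by (rule Bochner_Integration.integral_add) (auto intro!: int)
    finally have eq: "(\<integral>\<omega>. phi (NN n \<omega>) \<partial>M) = \<dots>" .
    have nn: "0 \<le> (\<integral>\<omega>. phi (NN n \<omega>) \<partial>M)" by (intro integral_nonneg_AE AE_I2 phi_nonneg)
    show "norm ((\<integral>\<omega>. phi (NN n \<omega>) \<partial>M) - 0) < e"
      using eq nn near' far by simp
  qed
qed

end

theorem mainTheorem10:
  fixes M :: "'m measure"
    and Y :: "nat \<Rightarrow> 'm \<Rightarrow> 'a :: metric_space"
    and NN :: "nat \<Rightarrow> 'm \<Rightarrow> 'a"
    and \<eta> :: "'a \<Rightarrow> real"
    and x :: 'a
  assumes prob: "prob_space M"
    and meas_Y: "\<And>i. Y i \<in> measurable M borel"
    and indep: "prob_space.indep_vars M (\<lambda>_. borel) Y UNIV"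
    and ident: "\<And>i. distr M borel (Y i) = distr M borel (Y 0)"
    and supp: "\<And>r. r > 0 \<Longrightarrow> measure M {\<omega> \<in> space M. Y 0 \<omega> \<in> cball x r} > 0"
    and eta_meas: "\<eta> \<in> borel_measurable borel"
    and eta_bdd: "\<exists>B. \<forall>y. \<bar>\<eta> y\<bar> \<le> B"
    and NN_meas: "\<And>m. m \<ge> 1 \<Longrightarrow> NN m \<in> measurable M borel"
    and NN_in: "\<And>m \<omega>. m \<ge> 1 \<Longrightarrow> \<omega> \<in> space M \<Longrightarrow> \<exists>i\<in>{1..m}. NN m \<omega> = Y i \<omega>"
    and NN_min: "\<And>m \<omega> i. m \<ge> 1 \<Longrightarrow> \<omega> \<in> space M \<Longrightarrow> i \<in> {1..m} \<Longrightarrow>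
                   dist x (NN m \<omega>) \<le> dist x (Y i \<omega>)"
    and condB: "\<exists>C>0. \<exists>R>0. \<exists>M0::nat. \<forall>r m. 0 < r \<and> r < R \<and> m \<ge> M0 \<and> m \<ge> 1 \<and>
                   measure M {\<omega> \<in> space M. Y 0 \<omega> \<in> sphere x r} > 0 \<longrightarrow>
                   (prob_space.expectation M (\<lambda>\<omega>. indicator (sphere x r) (NN m \<omega>) * \<bar>\<eta> (NN m \<omega>) - \<eta> x\<bar>)
                      / measure M {\<omega> \<in> space M. NN m \<omega> \<in> sphere x r})
                   \<le> C * (prob_space.expectation M (\<lambda>\<omega>. indicator (sphere x r) (Y 0 \<omega>) * \<bar>\<eta> (Y 0 \<omega>) - \<eta> x\<bar>)
                      / measure M {\<omega> \<in> space M. Y 0 \<omega> \<in> sphere x r})"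
    and lebesgue: "((\<lambda>r. prob_space.expectation M (\<lambda>\<omega>. indicator (cball x r) (Y 0 \<omega>) * \<bar>\<eta> (Y 0 \<omega>) - \<eta> x\<bar>)
                      / measure M {\<omega> \<in> space M. Y 0 \<omega> \<in> cball x r}) \<longlongrightarrow> 0) (at_right 0)"
  shows "(\<lambda>m. prob_space.expectation M (\<lambda>\<omega>. \<bar>\<eta> (NN m \<omega>) - \<eta> x\<bar>)) \<longlonglongrightarrow> 0"
proof -
  obtain B where B: "\<And>y. \<bar>\<eta> y\<bar> \<le> B" using eta_bdd by blast
  interpret N: nnset M Y NN \<eta> x B
    by (intro nnset.intro nnset_axioms.intro prob meas_Y indep ident eta_meas NN_meas) (use B NN_in NN_min in auto)
  obtain C R M0 where C: "C > 0" "R > 0" and cB: "\<forall>r m. 0 < r \<and> r < R \<and> m \<ge> M0 \<and> m \<ge> 1 \<and>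
                   measure M {\<omega> \<in> space M. Y 0 \<omega> \<in> sphere x r} > 0 \<longrightarrow>
                   (prob_space.expectation M (\<lambda>\<omega>. indicator (sphere x r) (NN m \<omega>) * \<bar>\<eta> (NN m \<omega>) - \<eta> x\<bar>)
                      / measure M {\<omega> \<in> space M. NN m \<omega> \<in> sphere x r})
                   \<le> C * (prob_space.expectation M (\<lambda>\<omega>. indicator (sphere x r) (Y 0 \<omega>) * \<bar>\<eta> (Y 0 \<omega>) - \<eta> x\<bar>)
                      / measure M {\<omega> \<in> space M. Y 0 \<omega> \<in> sphere x r})"
    using condB by blast
  have "(\<lambda>m. \<integral>\<omega>. N.phi (NN m \<omega>) \<partial>M) \<longlonglongrightarrow> 0"
  proof (rule N.main_locale[OF C(1) C(2)])
    fix m r assume m: "m \<ge> M0" "m \<ge> 1" and r: "0 < r" "r < R" and pr: "0 < N.pa r"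
    have e1: "measure M {\<omega> \<in> space M. Y 0 \<omega> \<in> sphere x r} = N.pa r"
      unfolding N.pa_def N.D_def by (simp add: dist_commute)
    have e2: "measure M {\<omega> \<in> space M. NN m \<omega> \<in> sphere x r} = measure M {\<omega> \<in> space M. N.Ds m \<omega> = r}"
      unfolding N.Ds_def by (simp add: dist_commute)
    have e3: "prob_space.expectation M (\<lambda>\<omega>. indicator (sphere x r) (NN m \<omega>) * \<bar>\<eta> (NN m \<omega>) - \<eta> x\<bar>)
        = (\<integral>\<omega>. N.phi (NN m \<omega>) * indicator {r} (N.Ds m \<omega>) \<partial>M)"
      by (intro Bochner_Integration.integral_cong refl) (auto simp: N.phi_def N.Ds_def dist_commute split: split_indicator)
    have e4: "prob_space.expectation M (\<lambda>\<omega>. indicator (sphere x r) (Y 0 \<omega>) * \<bar>\<eta> (Y 0 \<omega>) - \<eta> x\<bar>)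
        = (\<integral>\<omega>. N.phi (Y 0 \<omega>) * indicator {r} (N.D 0 \<omega>) \<partial>M)"
      by (intro Bochner_Integration.integral_cong refl) (auto simp: N.phi_def N.D_def dist_commute split: split_indicator)
    show "(\<integral>\<omega>. N.phi (NN m \<omega>) * indicator {r} (N.Ds m \<omega>) \<partial>M) / measure M {\<omega> \<in> space M. N.Ds m \<omega> = r}
        \<le> C * ((\<integral>\<omega>. N.phi (Y 0 \<omega>) * indicator {r} (N.D 0 \<omega>) \<partial>M) / N.pa r)"
      using cB[rule_format, of r m] m r pr unfolding e1 e2 e3 e4 by auto
  next
    fix r :: real assume r: "0 < r"
    have "N.F r = measure M {\<omega> \<in> space M. Y 0 \<omega> \<in> cball x r}"
      unfolding N.F_def N.D_def by simp
    then show "0 < N.F r" using supp[OF r] by simp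
  next
    have "(\<lambda>r. prob_space.expectation M (\<lambda>\<omega>. indicator (cball x r) (Y 0 \<omega>) * \<bar>\<eta> (Y 0 \<omega>) - \<eta> x\<bar>)
                      / measure M {\<omega> \<in> space M. Y 0 \<omega> \<in> cball x r})
        = (\<lambda>r. (\<integral>\<omega>. N.phi (Y 0 \<omega>) * indicator {..r} (N.D 0 \<omega>) \<partial>M) / N.F r)"
    proof (intro ext)
      fix r
      have "prob_space.expectation M (\<lambda>\<omega>. indicator (cball x r) (Y 0 \<omega>) * \<bar>\<eta> (Y 0 \<omega>) - \<eta> x\<bar>)
          = (\<integral>\<omega>. N.phi (Y 0 \<omega>) * indicator {..r} (N.D 0 \<omega>) \<partial>M)"
        by (intro Bochner_Integration.integral_cong refl) (auto simp: N.phi_def N.D_def split: split_indicator)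
      moreover have "measure M {\<omega> \<in> space M. Y 0 \<omega> \<in> cball x r} = N.F r"
        unfolding N.F_def N.D_def by simp
      ultimately show "prob_space.expectation M (\<lambda>\<omega>. indicator (cball x r) (Y 0 \<omega>) * \<bar>\<eta> (Y 0 \<omega>) - \<eta> x\<bar>)
                      / measure M {\<omega> \<in> space M. Y 0 \<omega> \<in> cball x r}
        = (\<integral>\<omega>. N.phi (Y 0 \<omega>) * indicator {..r} (N.D 0 \<omega>) \<partial>M) / N.F r" by simp
    qed
    then show "((\<lambda>r. (\<integral>\<omega>. N.phi (Y 0 \<omega>) * indicator {..r} (N.D 0 \<omega>) \<partial>M) / N.F r) \<longlongrightarrow> 0) (at_right 0)"
      using lebesgue by simp
  qed
  then show ?thesis by (simp add: N.phi_def)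
qed

end
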